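(* Assume the setting, regularity assumptions and Conditions (C1)–(C3) described in the context. Then $$\big\|D_{r_n}^T\Sigma_{n,g}^{-1}D_{r_n}-D_m^T\widetilde\Sigma^{-1}D_m\big\|=o(1)\quad (n\to\infty),$$ where $D_{r_n}=E(\partial g_{r_n}(\beta_0)/\partial\beta^T)$ and $D_m=E(\partial m(\beta_0;Y,Z)/\partial\beta^T)$.
   Context: Setting: $(Y,Z,X)$ with $Y$ an outcome, $Z\in\{0,1,\dots,K\}$ a randomized treatment indicator with known probabilities $\pi_k=P(Z=k)$, $\sum_k\pi_k=1$, and $X$ a covariate vector independent of $Z$. Let $m(\beta;Y,Z)$ be a $q$-dimensional estimating function with parameter $\beta\in\mathbb{R}^q$, $\beta_0$ the true value with $E\,m(\beta_0;Y,Z)=0$. Regularity assumptions on $m$: $D_m$ has full rank $q$; near $\beta_0$, $\partial m/\partial\beta^T$ and $\partial^2 m/\partial\beta\partial\beta^T$ are continuous in $\beta$ with norms bounded by an integrable function. For each $n$, let $r_n>q$ and $V_n$ an $(r_n-q)$-vector whose $j$-th component is $(1_{(Z=k_j)}-\pi_{k_j})h_j(X)$ for some $k_j$ and real function $h_j$. Conditions: (C1) there is a non-random $(r_n-q)\times(r_n-q)$ matrix $W_n$ such that, with $g_{r_n}(\beta)=(m(\beta;Y,Z)^T,(W_nV_n)^T)^T$: (i) the components of $g_{r_n}$ are uniformly bounded by a finite constant $M>0$; (ii) the eigenvalues of $\Sigma_{n,g}=E(g_{r_n}(\beta_0)g_{r_n}(\beta_0)^T)$ are bounded away from zero and infinity;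 (iii) there is a non-random $q\times(r_n-q)$ matrix $A_n$ with $A_nW_nV_n\to\sum_{k=0}^K(1_{(Z=k)}-\pi_k)E(m(\beta_0;Y,Z)\mid Z=k,X)$ in $L^2$. (C2) $r_n^3=o(n)$. (C3) $\widetilde{\Sigma}=E(\widetilde m\widetilde m^T)$ is positive definite, where $\widetilde m=m(\beta_0;Y,Z)-\sum_{k=0}^K(1_{(Z=k)}-\pi_k)E(m(\beta_0;Y,Z)\mid Z=k,X)$. *)

theory Defs
  imports "HOL-Probability.Probability" "Jordan_Normal_Form.Char_Poly"
    "Jordan_Normal_Form.Gauss_Jordan_Elimination" "Jordan_Normal_Form.DL_Rank"
begin

no_notation Matrix.vec_index (infixl \<open>$\<close> 100)

text \<open>The parameter space is real^'q (so q = CARD('q)).  To pass to the varying-dimension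
  matrices of the JNF library we fix once and for all an enumeration of the coordinates.\<close>

definition qidx :: "nat \<Rightarrow> 'q::finite" where
  "qidx = (SOME f. bij_betw f {..<CARD('q)} UNIV)"

definition tovec :: "real^'q::finite \<Rightarrow> real vec" where
  "tovec u = vec CARD('q) (\<lambda>i. u $ qidx i)"

definition Vvec :: "nat \<Rightarrow> ('w \<Rightarrow> nat) \<Rightarrow> ('w \<Rightarrow> 'x) \<Rightarrow> (nat \<Rightarrow> real) \<Rightarrow> (nat \<Rightarrow> nat)
    \<Rightarrow> (nat \<Rightarrow> 'x \<Rightarrow> real) \<Rightarrow> 'w \<Rightarrow> real vec" where
  "Vvec d Z X \<pi> k h \<omega> = vec d (\<lambda>j. (of_bool (Z \<omega> = k j) - \<pi> (k j)) * h j (X \<omega>))"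

definition gvec :: "(real^'q::finite \<Rightarrow> 'y \<Rightarrow> nat \<Rightarrow> real^'q) \<Rightarrow> ('w \<Rightarrow> 'y) \<Rightarrow> ('w \<Rightarrow> nat)
    \<Rightarrow> real mat \<Rightarrow> ('w \<Rightarrow> real vec) \<Rightarrow> real^'q \<Rightarrow> 'w \<Rightarrow> real vec" where
  "gvec m Y Z W V \<beta> \<omega> = tovec (m \<beta> (Y \<omega>) (Z \<omega>)) @\<^sub>v (W *\<^sub>v V \<omega>)"

definition smom :: "'w measure \<Rightarrow> nat \<Rightarrow> ('w \<Rightarrow> real vec) \<Rightarrow> real mat" where
  "smom M d f = mat d d (\<lambda>(a,b). LINT \<omega>|M. vec_index (f \<omega>) a * vec_index (f \<omega>) b)"

definition jac_exp :: "'w measure \<Rightarrow> nat \<Rightarrow> (real^'q::finite \<Rightarrow> 'w \<Rightarrow> real vec) \<Rightarrow> real^'q \<Rightarrow> real mat" where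
  "jac_exp M d G \<beta>0 = mat d CARD('q)
     (\<lambda>(a,j). LINT \<omega>|M. deriv (\<lambda>t. vec_index (G (\<beta>0 + t *\<^sub>R axis (qidx j) 1) \<omega>) a) 0)"

text \<open>Conditional expectation E(f | Z = k, X) = E(f 1(Z=k) | X) / P(Z = k | X),
  where conditioning on X means conditioning on the sigma-algebra generated by X.\<close>
definition cexp_ZX :: "'w measure \<Rightarrow> ('w \<Rightarrow> 'x) \<Rightarrow> 'x measure \<Rightarrow> ('w \<Rightarrow> nat)
    \<Rightarrow> ('w \<Rightarrow> real) \<Rightarrow> nat \<Rightarrow> 'w \<Rightarrow> real" where
  "cexp_ZX M X MX Z f k \<omega> =
     real_cond_exp M (vimage_algebra (space M) X MX) (\<lambda>w. f w * of_bool (Z w = k)) \<omega>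
     / real_cond_exp M (vimage_algebra (space M) X MX) (\<lambda>w. of_bool (Z w = k)) \<omega>"

definition aug_term :: "'w measure \<Rightarrow> ('w \<Rightarrow> 'x) \<Rightarrow> 'x measure \<Rightarrow> ('w \<Rightarrow> nat) \<Rightarrow> nat
    \<Rightarrow> (nat \<Rightarrow> real) \<Rightarrow> ('w \<Rightarrow> real^'q::finite) \<Rightarrow> 'w \<Rightarrow> real^'q" where
  "aug_term M X MX Z K \<pi> f \<omega> =
     (\<chi> i. \<Sum>k\<in>{0..K}. (of_bool (Z \<omega> = k) - \<pi> k) * cexp_ZX M X MX Z (\<lambda>w. f w $ i) k \<omega>)"

definition minv :: "real mat \<Rightarrow> real mat" where
  "minv A = the (mat_inverse A)"

definition fro_norm :: "real mat \<Rightarrow> real" where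
  "fro_norm A = sqrt (\<Sum>i<dim_row A. \<Sum>j<dim_col A. (A $$ (i,j))\<^sup>2)"

end

theory Submission
  imports Defs
begin

definition bddf :: "'w measure \<Rightarrow> ('w \<Rightarrow> real) \<Rightarrow> bool" where
  "bddf M f \<longleftrightarrow> f \<in> borel_measurable M \<and> (\<exists>B. AE x in M. \<bar>f x\<bar> \<le> B)"

lemma bddf_meas: "bddf M f \<Longrightarrow> f \<in> borel_measurable M"
  by (simp add: bddf_def)

lemma bddf_const[intro]: "bddf M (\<lambda>_. c)"
  unfolding bddf_def by auto

lemma bddf_add[intro]: "bddf M f \<Longrightarrow> bddf M g \<Longrightarrow> bddf M (\<lambda>x. f x + g x)"
  unfolding bddf_def
proof (elim conjE exE, intro conjI)
  fix B C assume "AE x in M. \<bar>f x\<bar> \<le> B" "AE x in M. \<bar>g x\<bar> \<le> C"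
  then show "\<exists>B. AE x in M. \<bar>f x + g x\<bar> \<le> B"
    by (intro exI[of _ "B + C"]) (auto elim!: AE_mp)
qed auto

lemma bddf_mult[intro]: "bddf M f \<Longrightarrow> bddf M g \<Longrightarrow> bddf M (\<lambda>x. f x * g x)"
  unfolding bddf_def
proof (elim conjE exE, intro conjI)
  fix B C assume "AE x in M. \<bar>f x\<bar> \<le> B" "AE x in M. \<bar>g x\<bar> \<le> C"
  then show "\<exists>B. AE x in M. \<bar>f x * g x\<bar> \<le> B"
  proof (intro exI[of _ "B * C"], elim AE_mp, intro AE_I2 impI)
    fix x assume "\<bar>f x\<bar> \<le> B" "\<bar>g x\<bar> \<le> C"
    then show "\<bar>f x * g x\<bar> \<le> B * C"
      by (simp add: abs_mult mult_mono')
  qed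
qed auto

lemma bddf_minus[intro]: "bddf M f \<Longrightarrow> bddf M (\<lambda>x. - f x)"
  unfolding bddf_def by auto

lemma bddf_diff[intro]: "bddf M f \<Longrightarrow> bddf M g \<Longrightarrow> bddf M (\<lambda>x. f x - g x)"
  using bddf_add[of M f "\<lambda>x. - g x"] bddf_minus[of M g] by simp

lemma bddf_sum[intro]: "(\<And>i. i \<in> I \<Longrightarrow> bddf M (f i)) \<Longrightarrow> bddf M (\<lambda>x. \<Sum>i\<in>I. f i x)"
proof (induction I rule: infinite_finite_induct)
  case (insert a I)
  then show ?case using bddf_add[of M "f a" "\<lambda>x. \<Sum>i\<in>I. f i x"] by simp
qed auto

lemma bddf_integrable: "finite_measure M \<Longrightarrow> bddf M f \<Longrightarrow> integrable M f"
  unfolding bddf_def using finite_measure.integrable_const_bound[of M f] by auto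

lemma bddf_AE: assumes "bddf M g" "f \<in> borel_measurable M" "AE x in M. f x = g x" shows "bddf M f"
proof -
  obtain B where B: "AE x in M. \<bar>g x\<bar> \<le> B" using assms(1) unfolding bddf_def by auto
  have "AE x in M. \<bar>f x\<bar> \<le> B" using B assms(3) by eventually_elim simp
  then show ?thesis using assms(2) unfolding bddf_def by auto
qed

lemma bddf_boundI: "f \<in> borel_measurable M \<Longrightarrow> AE x in M. \<bar>f x\<bar> \<le> B \<Longrightarrow> bddf M f"
  unfolding bddf_def by auto

lemma CS_integral:
  assumes "finite_measure M" "bddf M f" "bddf M g"
  shows "(\<integral>x. f x * g x \<partial>M)\<^sup>2 \<le> (\<integral>x. (f x)\<^sup>2 \<partial>M) * (\<integral>x. (g x)\<^sup>2 \<partial>M)"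
proof -
  have I: "integrable M h" if "bddf M h" for h using bddf_integrable[OF assms(1) that] .
  define a where "a = (\<integral>x. (f x)\<^sup>2 \<partial>M)"
  define b where "b = (\<integral>x. f x * g x \<partial>M)"
  define c where "c = (\<integral>x. (g x)\<^sup>2 \<partial>M)"
  have key: "0 \<le> t\<^sup>2 * a - 2 * t * b + c" for t
  proof -
    have "0 \<le> (\<integral>x. (t * f x - g x)\<^sup>2 \<partial>M)" by simp
    also have "(\<lambda>x. (t * f x - g x)\<^sup>2) = (\<lambda>x. t\<^sup>2 * (f x)\<^sup>2 - 2 * t * (f x * g x) + (g x)\<^sup>2)"
      by (auto simp: power2_eq_square algebra_simps)
    also have "(\<integral>x. t\<^sup>2 * (f x)\<^sup>2 - 2 * t * (f x * g x) + (g x)\<^sup>2 \<partial>M) = t\<^sup>2 * a - 2 * t * b + c"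
    proof -
      have i1: "integrable M (\<lambda>x. f x * f x)" "integrable M (\<lambda>x. f x * g x)" "integrable M (\<lambda>x. g x * g x)"
        using I assms(2,3) by auto
      have "(\<integral>x. t\<^sup>2 * (f x)\<^sup>2 - 2 * t * (f x * g x) + (g x)\<^sup>2 \<partial>M)
          = (\<integral>x. t\<^sup>2 * (f x)\<^sup>2 - 2 * t * (f x * g x) \<partial>M) + (\<integral>x. (g x)\<^sup>2 \<partial>M)"
        unfolding power2_eq_square by (rule Bochner_Integration.integral_add) (use i1 in \<open>auto intro!: integrable_diff integrable_mult_right\<close>)
      also have "(\<integral>x. t\<^sup>2 * (f x)\<^sup>2 - 2 * t * (f x * g x) \<partial>M) = (\<integral>x. t\<^sup>2 * (f x)\<^sup>2 \<partial>M) - (\<integral>x. 2 * t * (f x * g x) \<partial>M)"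
        unfolding power2_eq_square by (rule Bochner_Integration.integral_diff) (use i1 in \<open>auto intro!: integrable_diff integrable_mult_right\<close>)
      finally show ?thesis unfolding a_def b_def c_def by simp
    qed
    finally show ?thesis .
  qed
  have a0: "a \<ge> 0" unfolding a_def by simp
  show ?thesis
  proof (cases "a = 0")
    case True
    show ?thesis
    proof (cases "b = 0")
      case False
      have k: "0 \<le> ((c+1)/(2*b))\<^sup>2 * a - 2*((c+1)/(2*b))*b + c" by (rule key)
      have "2*((c+1)/(2*b))*b = c+1" using False by (simp add: field_simps)
      then have "0 \<le> - 1 + (0::real)" using k True by simp
      then show ?thesis by simp
    qed (simp add: b_def[symmetric] True a_def[symmetric])
  next
    case False
    then have ap: "a > 0" using a0 by simp
    have "0 \<le> (b/a)\<^sup>2 * a - 2 * (b/a) * b + c" using key by blast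
    also have "\<dots> = c - b\<^sup>2 / a" using ap by (simp add: power2_eq_square field_simps)
    finally have "b\<^sup>2 / a \<le> c" by simp
    then have "b\<^sup>2 \<le> c * a" using ap by (simp add: field_simps)
    then show ?thesis by (simp add: a_def b_def c_def mult.commute)
  qed
qed

lemma core_limit:
  fixes Q :: "nat \<Rightarrow> nat \<Rightarrow> nat \<Rightarrow> real" and st T :: "nat \<Rightarrow> nat \<Rightarrow> real" and \<delta> :: "nat \<Rightarrow> real"
  assumes dlim: "\<delta> \<longlonglongrightarrow> 0" and d0: "\<forall>n. \<delta> n \<ge> 0"
    and Qd: "\<forall>n i. i<q \<longrightarrow> Q n i i \<ge> 0"
    and E: "\<forall>n i j. i<q \<longrightarrow> j<q \<longrightarrow> ((\<Sum>a<q. Q n i a * st a j) - of_bool(i=j))\<^sup>2 \<le> Q n i i * \<delta> n"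
    and inv: "\<forall>i j. i<q \<longrightarrow> j<q \<longrightarrow> (\<Sum>k<q. st i k * T k j) = of_bool (i=j)"
    and ij: "i<q" "j<q"
  shows "(\<lambda>n. Q n i j) \<longlonglongrightarrow> T i j"
proof -
  define EE where "EE n i j = (\<Sum>a<q. Q n i a * st a j) - of_bool(i=j)" for n i j
  define s where "s n = sqrt (\<delta> n)" for n
  have slim: "s \<longlonglongrightarrow> 0" unfolding s_def using tendsto_real_sqrt[OF dlim] by simp
  have s0: "s n \<ge> 0" for n unfolding s_def using d0 by simp
  have Eb: "\<bar>EE n i k\<bar> \<le> sqrt (Q n i i) * s n" if "i<q" "k<q" for n i k
  proof -
    have "(EE n i k)\<^sup>2 \<le> Q n i i * \<delta> n" using E that unfolding EE_def by (simp add: sum_subtractf)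
    then have "sqrt ((EE n i k)\<^sup>2) \<le> sqrt (Q n i i * \<delta> n)" by (rule real_sqrt_le_mono)
    then show ?thesis unfolding s_def using d0 by (simp add: real_sqrt_mult)
  qed
  have Qexp: "Q n i j = T i j + (\<Sum>k<q. EE n i k * T k j)" if "i<q" "j<q" for n i j
  proof -
    have "(\<Sum>k<q. EE n i k * T k j) = (\<Sum>k<q. (\<Sum>a<q. Q n i a * st a k) * T k j) - (\<Sum>k<q. of_bool (i=k) * T k j)"
      unfolding EE_def by (simp add: algebra_simps sum_subtractf)
    also have "(\<Sum>k<q. of_bool (i=k) * T k j) = T i j" using that
    proof -
      have "(\<Sum>k<q. of_bool (i=k) * T k j) = (\<Sum>k<q. if k = i then T k j else 0)" by (intro sum.cong) auto
      then show ?thesis using that by simp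
    qed
    also have "(\<Sum>k<q. (\<Sum>a<q. Q n i a * st a k) * T k j) = (\<Sum>a<q. Q n i a * (\<Sum>k<q. st a k * T k j))"
      by (simp add: sum_distrib_left sum_distrib_right mult.assoc) (rule sum.swap)
    also have "\<dots> = (\<Sum>a<q. Q n i a * of_bool (a = j))" using inv that by (intro sum.cong) auto
    also have "\<dots> = Q n i j" using that
    proof -
      have "(\<Sum>a<q. Q n i a * of_bool (a = j)) = (\<Sum>a<q. if a = j then Q n i a else 0)" by (intro sum.cong) auto
      then show ?thesis using that by simp
    qed
    finally show ?thesis by simp
  qed
  define C0 where "C0 = (\<Sum>i<q. \<bar>T i i\<bar>)"
  define C1 where "C1 = (\<Sum>i<q. \<Sum>k<q. \<bar>T k i\<bar>)"
  have C00: "C0 \<ge> 0" and C10: "C1 \<ge> 0" unfolding C0_def C1_def by (auto intro: sum_nonneg)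
  have xb: "sqrt (Q n i i) \<le> max 1 (C0 + C1 * s n)" if "i<q" for n i
  proof -
    define x where "x = sqrt (Q n i i)"
    have x0: "x \<ge> 0" unfolding x_def using Qd that by simp
    have xx: "x\<^sup>2 = Q n i i" unfolding x_def using Qd that by simp
    have "Q n i i = T i i + (\<Sum>k<q. EE n i k * T k i)" using Qexp that by simp
    also have "\<dots> \<le> \<bar>T i i\<bar> + (\<Sum>k<q. \<bar>EE n i k\<bar> * \<bar>T k i\<bar>)"
      by (intro add_mono abs_ge_self sum_mono) (metis abs_ge_self abs_mult)
    also have "\<dots> \<le> C0 + (\<Sum>k<q. (x * s n) * \<bar>T k i\<bar>)"
    proof (intro add_mono sum_mono mult_right_mono)
      show "\<bar>T i i\<bar> \<le> C0" unfolding C0_def using that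
        by (intro member_le_sum) auto
    qed (use Eb that in \<open>auto simp: x_def\<close>)
    also have "(\<Sum>k<q. (x * s n) * \<bar>T k i\<bar>) = (x * s n) * (\<Sum>k<q. \<bar>T k i\<bar>)" by (simp add: sum_distrib_left)
    also have "(\<Sum>k<q. \<bar>T k i\<bar>) \<le> C1" unfolding C1_def using that
      by (intro member_le_sum[where f="\<lambda>i. \<Sum>k<q. \<bar>T k i\<bar>"]) (auto intro: sum_nonneg)
    then have "(x * s n) * (\<Sum>k<q. \<bar>T k i\<bar>) \<le> (x * s n) * C1" using x0 s0 by (intro mult_left_mono) auto
    finally have main: "x\<^sup>2 \<le> C0 + C1 * s n * x" using xx by (simp add: algebra_simps)
    show ?thesis
    proof (cases "x \<le> 1")
      case False
      then have "C0 \<le> C0 * x" using C00 by (simp add: mult_le_cancel_left1)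
      with main have "x * x \<le> (C0 + C1 * s n) * x" by (simp add: power2_eq_square algebra_simps)
      then have "x \<le> C0 + C1 * s n" using False by simp
      then show ?thesis unfolding x_def by simp
    next
      case True then have "x \<le> max 1 (C0 + C1 * s n)" by simp
      then show ?thesis by (simp add: x_def)
    qed
  qed
  have Elim: "(\<lambda>n. EE n i k) \<longlonglongrightarrow> 0" if "i<q" "k<q" for i k
  proof (rule Lim_null_comparison)
    show "\<forall>\<^sub>F n in sequentially. norm (EE n i k) \<le> max 1 (C0 + C1 * s n) * s n"
    proof (intro always_eventually allI)
      fix n
      have "norm (EE n i k) \<le> sqrt (Q n i i) * s n" using Eb that by simp
      also have "\<dots> \<le> max 1 (C0 + C1 * s n) * s n" using xb[OF that(1)] s0 by (intro mult_right_mono) auto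
      finally show "norm (EE n i k) \<le> max 1 (C0 + C1 * s n) * s n" .
    qed
    have "(\<lambda>n. max 1 (C0 + C1 * s n) * s n) \<longlonglongrightarrow> max 1 (C0 + C1 * 0) * 0"
      by (intro tendsto_intros slim)
    then show "(\<lambda>n. max 1 (C0 + C1 * s n) * s n) \<longlonglongrightarrow> 0" by simp
  qed
  have "(\<lambda>n. T i j + (\<Sum>k<q. EE n i k * T k j)) \<longlonglongrightarrow> T i j + (\<Sum>k<q. 0 * T k j)"
    by (intro tendsto_intros Elim ij) (use ij in auto)
  then show ?thesis using Qexp[OF ij] by simp
qed

lemma minv_props:
  fixes S :: "real mat"
  assumes S: "S \<in> carrier_mat n n" and nz: "\<And>v. v \<in> carrier_vec n \<Longrightarrow> v \<noteq> 0\<^sub>v n \<Longrightarrow> S *\<^sub>v v \<noteq> 0\<^sub>v n"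
  shows "S * minv S = 1\<^sub>m n" "minv S * S = 1\<^sub>m n" "minv S \<in> carrier_mat n n"
proof -
  have "det S \<noteq> 0" using det_0_iff_vec_prod_zero[OF S] nz by auto
  then have U: "S \<in> Units (ring_mat TYPE(real) n ())" by (rule det_non_zero_imp_unit[OF S])
  obtain B where B: "mat_inverse S = Some B"
    using mat_inverse(1)[OF S, of "()"] U by (cases "mat_inverse S") auto
  then have "minv S = B" by (simp add: minv_def)
  then show "S * minv S = 1\<^sub>m n" "minv S * S = 1\<^sub>m n" "minv S \<in> carrier_mat n n"
    using mat_inverse(2)[OF S B] by auto
qed


locale rsetting = prob_space M for M :: "'w measure" +
  fixes X :: "'w \<Rightarrow> 'x" and MX :: "'x measure" and Z :: "'w \<Rightarrow> nat" and K :: nat and \<pi> :: "nat \<Rightarrow> real"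
  assumes Z_meas: "Z \<in> measurable M (count_space UNIV)"
  and X_meas: "X \<in> measurable M MX"
  and Z_range: "\<forall>\<omega>\<in>space M. Z \<omega> \<le> K"
  and pi_def: "\<forall>k. \<pi> k = measure M {\<omega> \<in> space M. Z \<omega> = k}"
  and indep: "\<forall>k. \<forall>B\<in>sets MX. measure M ({\<omega>\<in>space M. Z \<omega> = k} \<inter> (X -` B \<inter> space M))
              = measure M {\<omega>\<in>space M. Z \<omega> = k} * measure M (X -` B \<inter> space M)"
begin

abbreviation "G \<equiv> vimage_algebra (space M) X MX"

lemma subalgG: "subalgebra M G"
  unfolding subalgebra_def using sets_image_in_sets[OF refl X_meas] by simp

sublocale sf: finite_measure_subalgebra M G
  by unfold_locales (rule subalgG)

lemma GtoM: "f \<in> borel_measurable G \<Longrightarrow> f \<in> borel_measurable M"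
  by (rule measurable_from_subalg[OF subalgG])

lemma Zset[measurable]: "{\<omega>\<in>space M. Z \<omega> = k} \<in> sets M"
proof -
  have "{\<omega>\<in>space M. Z \<omega> = k} = Z -` {k} \<inter> space M" by auto
  then show ?thesis using measurable_sets[OF Z_meas, of "{k}"] by simp
qed

lemma ind_meas[measurable]: "(\<lambda>\<omega>. of_bool (Z \<omega> = k) :: real) \<in> borel_measurable M"
proof -
  have "(\<lambda>\<omega>. of_bool (Z \<omega> = k) :: real) = (\<lambda>\<omega>. indicator {\<omega>\<in>space M. Z \<omega> = k} \<omega>)" if "False" using that by simp
  have "(\<lambda>\<omega>. indicator {\<omega>\<in>space M. Z \<omega> = k} \<omega> :: real) \<in> borel_measurable M" by simp
  then show ?thesis
    by (rule measurable_cong[THEN iffD1, rotated]) (auto simp: indicator_def)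
qed

lemma ind_bddf[intro]: "bddf M (\<lambda>\<omega>. of_bool (Z \<omega> = k))"
  by (rule bddf_boundI[where B=1]) auto

lemmas bddf_intros = bddf_mult bddf_add bddf_diff bddf_minus ind_bddf bddf_const

lemma ind_sum: "\<omega> \<in> space M \<Longrightarrow> (\<Sum>k\<in>{0..K}. of_bool (Z \<omega> = k) :: real) = 1"
proof -
  assume w: "\<omega> \<in> space M"
  have "(\<Sum>k\<in>{0..K}. of_bool (Z \<omega> = k) :: real) = (\<Sum>k\<in>{0..K}. if k = Z \<omega> then 1 else 0)"
    by (intro sum.cong) auto
  also have "\<dots> = 1" using Z_range w by simp
  finally show ?thesis .
qed

lemma pi_int: "\<pi> k = (\<integral>\<omega>. of_bool (Z \<omega> = k) \<partial>M)"
proof -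
  have "(\<integral>\<omega>. of_bool (Z \<omega> = k) \<partial>M) = (\<integral>\<omega>. indicator {\<omega>\<in>space M. Z \<omega> = k} \<omega> \<partial>M)"
    by (intro Bochner_Integration.integral_cong) (auto simp: indicator_def)
  also have "\<dots> = measure M {\<omega>\<in>space M. Z \<omega> = k}" by (simp add: Int_absorb2 Zset sets.sets_into_space)
  finally show ?thesis using pi_def by simp
qed

lemma pi_nonneg: "\<pi> k \<ge> 0"
  using pi_def by simp

lemma pi_sum: "(\<Sum>k\<in>{0..K}. \<pi> k) = 1"
proof -
  have "(\<Sum>k\<in>{0..K}. \<pi> k) = (\<integral>\<omega>. (\<Sum>k\<in>{0..K}. of_bool (Z \<omega> = k)) \<partial>M)"
    unfolding pi_int by (rule Bochner_Integration.integral_sum[symmetric]) (auto intro!: bddf_integrable)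
  also have "\<dots> = (\<integral>\<omega>. 1 \<partial>M)" by (intro Bochner_Integration.integral_cong) (use ind_sum in auto)
  also have "\<dots> = 1" by (simp add: prob_space)
  finally show ?thesis .
qed

lemma ind_AE0: "\<pi> k = 0 \<Longrightarrow> AE \<omega> in M. Z \<omega> \<noteq> k"
proof -
  assume "\<pi> k = 0"
  then have "{\<omega>\<in>space M. Z \<omega> = k} \<in> null_sets M"
    using pi_def by (auto simp: null_sets_def emeasure_eq_measure)
  then show ?thesis by (rule AE_I') auto
qed

lemma CE1: "AE \<omega> in M. real_cond_exp M G (\<lambda>\<omega>. of_bool (Z \<omega> = k)) \<omega> = \<pi> k"
proof (rule sf.real_cond_exp_charact)
  fix A assume A: "A \<in> sets G"
  have Xs: "X \<in> space M \<rightarrow> space MX" by (auto intro: measurable_space[OF X_meas])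
  obtain B where B: "B \<in> sets MX" "A = X -` B \<inter> space M"
    using A sets_vimage_algebra2[OF Xs] by auto
  have AM: "A \<in> sets M" using A subalgG unfolding subalgebra_def by auto
  have "(\<integral>x\<in>A. of_bool (Z x = k) \<partial>M) = (\<integral>x. indicator ({\<omega>\<in>space M. Z \<omega> = k} \<inter> A) x \<partial>M)"
    unfolding set_lebesgue_integral_def by (intro Bochner_Integration.integral_cong) (auto simp: indicator_def)
  also have "\<dots> = measure M ({\<omega>\<in>space M. Z \<omega> = k} \<inter> A)" by (simp add: Int_absorb2 sets.sets_into_space AM Int_assoc)
  also have "\<dots> = \<pi> k * measure M A" using indep B pi_def by simp
  also have "\<dots> = (\<integral>x\<in>A. \<pi> k \<partial>M)"
    unfolding set_lebesgue_integral_def using AM by (simp add: Int_absorb2 sets.sets_into_space)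
  finally show "(\<integral>x\<in>A. of_bool (Z x = k) \<partial>M) = (\<integral>x\<in>A. \<pi> k \<partial>M)" .
qed (auto intro!: bddf_integrable)

lemma EXP_IND:
  assumes "\<psi> \<in> borel_measurable G" "bddf M \<psi>"
  shows "(\<integral>\<omega>. of_bool (Z \<omega> = k) * \<psi> \<omega> \<partial>M) = \<pi> k * (\<integral>\<omega>. \<psi> \<omega> \<partial>M)"
proof -
  have i: "integrable M (\<lambda>\<omega>. \<psi> \<omega> * of_bool (Z \<omega> = k))"
    using assms(2) by (intro bddf_integrable) auto
  have "(\<integral>\<omega>. of_bool (Z \<omega> = k) * \<psi> \<omega> \<partial>M) = (\<integral>\<omega>. \<psi> \<omega> * of_bool (Z \<omega> = k) \<partial>M)"
    by (simp add: mult.commute)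
  also have "\<dots> = (\<integral>\<omega>. \<psi> \<omega> * real_cond_exp M G (\<lambda>\<omega>. of_bool (Z \<omega> = k)) \<omega> \<partial>M)"
    using sf.real_cond_exp_intg(2)[OF i assms(1)] by simp
  also have "\<dots> = (\<integral>\<omega>. \<psi> \<omega> * \<pi> k \<partial>M)"
    using CE1[of k] GtoM[OF assms(1)]
    by (intro integral_cong_AE) (auto elim!: AE_mp)
  also have "\<dots> = \<pi> k * (\<integral>\<omega>. \<psi> \<omega> \<partial>M)" by simp
  finally show ?thesis .
qed

lemma rce_bound:
  assumes g: "g \<in> borel_measurable M" "\<forall>\<omega>\<in>space M. \<bar>g \<omega>\<bar> \<le> B"
  shows "AE \<omega> in M. \<bar>real_cond_exp M G g \<omega>\<bar> \<le> B"
proof -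
  have ig: "integrable M g" using g by (intro bddf_integrable bddf_boundI[where B=B]) auto
  have c: "AE \<omega> in M. real_cond_exp M G (\<lambda>_. c) \<omega> = c" for c
    by (rule sf.real_cond_exp_F_meas) auto
  have "AE \<omega> in M. real_cond_exp M G g \<omega> \<le> real_cond_exp M G (\<lambda>_. B) \<omega>"
    using g ig by (intro sf.real_cond_exp_mono) (auto intro!: AE_I2 simp: abs_le_iff)
  moreover have "AE \<omega> in M. real_cond_exp M G (\<lambda>_. -B) \<omega> \<le> real_cond_exp M G g \<omega>"
    using g ig by (intro sf.real_cond_exp_mono) (auto intro!: AE_I2 simp: abs_le_iff)
  ultimately show ?thesis using c[of B] c[of "-B"] by eventually_elim auto
qed

lemma L14:
  assumes "\<psi> \<in> borel_measurable G" "bddf M \<psi>"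
  shows "(\<integral>\<omega>. (of_bool (Z \<omega> = l) - \<pi> l) * (of_bool (Z \<omega> = k) - \<pi> k) * \<psi> \<omega> \<partial>M)
       = (of_bool (l = k) * \<pi> k - \<pi> k * \<pi> l) * (\<integral>\<omega>. \<psi> \<omega> \<partial>M)"
proof -
  have bI: "bddf M (\<lambda>\<omega>. of_bool (Z \<omega> = j) * \<psi> \<omega>)" for j using assms(2) by auto
  have iI: "integrable M (\<lambda>\<omega>. of_bool (Z \<omega> = j) * \<psi> \<omega>)" for j by (rule bddf_integrable[OF _ bI]) simp
  have ip: "integrable M \<psi>" by (rule bddf_integrable[OF _ assms(2)]) simp
  have eq: "(of_bool (Z \<omega> = l) - \<pi> l) * (of_bool (Z \<omega> = k) - \<pi> k) * \<psi> \<omega>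
      = of_bool (l = k) * (of_bool (Z \<omega> = k) * \<psi> \<omega>) - \<pi> k * (of_bool (Z \<omega> = l) * \<psi> \<omega>)
        - \<pi> l * (of_bool (Z \<omega> = k) * \<psi> \<omega>) + (\<pi> l * \<pi> k) * \<psi> \<omega>" for \<omega>
    by (cases "Z \<omega> = l"; cases "Z \<omega> = k"; cases "l = k") (auto simp: algebra_simps)
  have "(\<integral>\<omega>. (of_bool (Z \<omega> = l) - \<pi> l) * (of_bool (Z \<omega> = k) - \<pi> k) * \<psi> \<omega> \<partial>M)
      = of_bool (l = k) * (\<integral>\<omega>. of_bool (Z \<omega> = k) * \<psi> \<omega> \<partial>M) - \<pi> k * (\<integral>\<omega>. of_bool (Z \<omega> = l) * \<psi> \<omega> \<partial>M)
        - \<pi> l * (\<integral>\<omega>. of_bool (Z \<omega> = k) * \<psi> \<omega> \<partial>M) + (\<pi> l * \<pi> k) * (\<integral>\<omega>. \<psi> \<omega> \<partial>M)"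
    unfolding eq using iI ip
    by (subst Bochner_Integration.integral_add Bochner_Integration.integral_diff integral_mult_right_zero,
        (auto intro!: integrable_diff integrable_add integrable_mult_right)[2])+ simp
  also have "\<dots> = (of_bool (l = k) * \<pi> k - \<pi> k * \<pi> l) * (\<integral>\<omega>. \<psi> \<omega> \<partial>M)"
    unfolding EXP_IND[OF assms] by (simp add: algebra_simps)
  finally show ?thesis .
qed

end


context rsetting begin

lemma ORTH:
  fixes mi :: "'w \<Rightarrow> real"
  assumes mi: "mi \<in> borel_measurable M" "\<forall>\<omega>\<in>space M. \<bar>mi \<omega>\<bar> \<le> B"
    and phi: "\<phi> \<in> borel_measurable G" "bddf M \<phi>" and k: "k \<le> K"
  shows "(\<integral>\<omega>. (mi \<omega> - (\<Sum>l\<in>{0..K}. (of_bool (Z \<omega> = l) - \<pi> l) * cexp_ZX M X MX Z mi l \<omega>))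
             * ((of_bool (Z \<omega> = k) - \<pi> k) * \<phi> \<omega>) \<partial>M) = 0"
proof -
  define e where "e l = real_cond_exp M G (\<lambda>w. mi w * of_bool (Z w = l))" for l
  have eG: "e l \<in> borel_measurable G" for l unfolding e_def by (rule borel_measurable_cond_exp)
  have eM: "e l \<in> borel_measurable M" for l by (rule GtoM[OF eG])
  have eb: "AE \<omega> in M. \<bar>e l \<omega>\<bar> \<le> B" for l
    unfolding e_def using mi by (intro rce_bound) (auto simp: abs_mult)
  have cex: "AE \<omega> in M. cexp_ZX M X MX Z mi l \<omega> = e l \<omega> / \<pi> l" for l
    using CE1[of l] unfolding cexp_ZX_def e_def by eventually_elim simp
  define f where "f l \<omega> = e l \<omega> / \<pi> l" for l \<omega>
  have fG: "f l \<in> borel_measurable G" for l unfolding f_def using eG by measurable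
  have fM: "f l \<in> borel_measurable M" for l by (rule GtoM[OF fG])
  have fbd: "bddf M (f l)" for l
  proof (rule bddf_boundI[OF fM])
    show "AE x in M. \<bar>f l x\<bar> \<le> B / \<pi> l"
      using eb[of l]
    proof eventually_elim
      case (elim x) then show ?case using pi_nonneg[of l] by (auto simp: f_def abs_div intro: divide_right_mono)
    qed
  qed
  have phiM: "\<phi> \<in> borel_measurable M" by (rule GtoM[OF phi(1)])
  have mib: "bddf M mi" using mi by (intro bddf_boundI[where B=B]) auto
  have I: "integrable M h" if "bddf M h" for h by (rule bddf_integrable[OF _ that]) simp
  have SfAE: "AE \<omega> in M. (\<Sum>l\<in>{0..K}. (of_bool (Z \<omega> = l) - \<pi> l) * cexp_ZX M X MX Z mi l \<omega>)
                = (\<Sum>l\<in>{0..K}. (of_bool (Z \<omega> = l) - \<pi> l) * f l \<omega>)"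
  proof -
    have "AE \<omega> in M. \<forall>l\<in>{0..K}. cexp_ZX M X MX Z mi l \<omega> = f l \<omega>"
      by (rule AE_finite_allI) (auto simp: f_def cex)
    then show ?thesis by eventually_elim simp
  qed
  define a where "a l = (\<integral>\<omega>. \<phi> \<omega> * e l \<omega> \<partial>M)" for l
  have h1: "(\<integral>\<omega>. \<phi> \<omega> * (mi \<omega> * of_bool (Z \<omega> = l)) \<partial>M) = a l" for l
  proof -
    have "integrable M (\<lambda>\<omega>. \<phi> \<omega> * (mi \<omega> * of_bool (Z \<omega> = l)))"
      using phi(2) mib by (intro I bddf_mult ind_bddf)
    from sf.real_cond_exp_intg(2)[OF this phi(1)] show ?thesis unfolding a_def e_def using mi by simp
  qed
  have h0: "a l = 0" if "\<pi> l = 0" for l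
  proof -
    have "(\<integral>\<omega>. \<phi> \<omega> * (mi \<omega> * of_bool (Z \<omega> = l)) \<partial>M) = 0"
      using ind_AE0[OF that] by (intro integral_eq_zero_AE) (auto elim!: AE_mp)
    then show ?thesis using h1 by simp
  qed
  have fint: "(\<integral>\<omega>. f l \<omega> * \<phi> \<omega> \<partial>M) = a l / \<pi> l" for l
    unfolding f_def a_def by (simp add: mult.commute)
  define C where "C \<omega> = (of_bool (Z \<omega> = k) - \<pi> k) * \<phi> \<omega>" for \<omega>
  have Cb: "bddf M C" unfolding C_def by (intro bddf_intros phi(2))
  have "(\<integral>\<omega>. (mi \<omega> - (\<Sum>l\<in>{0..K}. (of_bool (Z \<omega> = l) - \<pi> l) * cexp_ZX M X MX Z mi l \<omega>))
             * ((of_bool (Z \<omega> = k) - \<pi> k) * \<phi> \<omega>) \<partial>M)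
      = (\<integral>\<omega>. mi \<omega> * C \<omega> - (\<Sum>l\<in>{0..K}. (of_bool (Z \<omega> = l) - \<pi> l) * (of_bool (Z \<omega> = k) - \<pi> k) * (f l \<omega> * \<phi> \<omega>)) \<partial>M)"
  proof (rule integral_cong_AE)
    show "AE \<omega> in M. (mi \<omega> - (\<Sum>l\<in>{0..K}. (of_bool (Z \<omega> = l) - \<pi> l) * cexp_ZX M X MX Z mi l \<omega>))
             * ((of_bool (Z \<omega> = k) - \<pi> k) * \<phi> \<omega>)
       = mi \<omega> * C \<omega> - (\<Sum>l\<in>{0..K}. (of_bool (Z \<omega> = l) - \<pi> l) * (of_bool (Z \<omega> = k) - \<pi> k) * (f l \<omega> * \<phi> \<omega>))"
      using SfAE by eventually_elim (simp add: C_def algebra_simps sum_distrib_left sum_distrib_right)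
  qed (auto simp: cexp_ZX_def C_def intro!: borel_measurable_sum borel_measurable_times borel_measurable_diff
       mi phiM fM borel_measurable_cond_exp2)
  also have "\<dots> = (\<integral>\<omega>. mi \<omega> * C \<omega> \<partial>M) - (\<Sum>l\<in>{0..K}. (\<integral>\<omega>. (of_bool (Z \<omega> = l) - \<pi> l) * (of_bool (Z \<omega> = k) - \<pi> k) * (f l \<omega> * \<phi> \<omega>) \<partial>M))"
    by (subst Bochner_Integration.integral_diff)
       (intro I bddf_intros bddf_sum mib Cb fbd phi(2) | subst Bochner_Integration.integral_sum | rule refl)+
  also have "(\<integral>\<omega>. mi \<omega> * C \<omega> \<partial>M) = a k - \<pi> k * (\<Sum>l\<in>{0..K}. a l)"
  proof -
    have "(\<integral>\<omega>. mi \<omega> * C \<omega> \<partial>M) = (\<integral>\<omega>. \<phi> \<omega> * (mi \<omega> * of_bool (Z \<omega> = k)) - \<pi> k * (\<phi> \<omega> * mi \<omega>) \<partial>M)"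
      unfolding C_def by (rule Bochner_Integration.integral_cong) (auto simp: algebra_simps)
    also have "\<dots> = (\<integral>\<omega>. \<phi> \<omega> * (mi \<omega> * of_bool (Z \<omega> = k)) \<partial>M) - \<pi> k * (\<integral>\<omega>. \<phi> \<omega> * mi \<omega> \<partial>M)"
      by (subst Bochner_Integration.integral_diff) (intro I bddf_intros mib phi(2) | simp)+
    also have "(\<integral>\<omega>. \<phi> \<omega> * mi \<omega> \<partial>M) = (\<integral>\<omega>. (\<Sum>l\<in>{0..K}. \<phi> \<omega> * (mi \<omega> * of_bool (Z \<omega> = l))) \<partial>M)"
    proof (rule Bochner_Integration.integral_cong)
      fix \<omega> assume "\<omega> \<in> space M"
      then show "\<phi> \<omega> * mi \<omega> = (\<Sum>l\<in>{0..K}. \<phi> \<omega> * (mi \<omega> * of_bool (Z \<omega> = l)))"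
        using ind_sum[of \<omega>] by (simp add: sum_distrib_left[symmetric])
    qed simp
    also have "\<dots> = (\<Sum>l\<in>{0..K}. a l)"
      by (subst Bochner_Integration.integral_sum) (intro I bddf_intros mib phi(2) | simp add: h1)+
    finally show ?thesis using h1 by simp
  qed
  also have "(\<Sum>l\<in>{0..K}. (\<integral>\<omega>. (of_bool (Z \<omega> = l) - \<pi> l) * (of_bool (Z \<omega> = k) - \<pi> k) * (f l \<omega> * \<phi> \<omega>) \<partial>M))
       = (\<Sum>l\<in>{0..K}. (of_bool (l = k) - \<pi> k) * a l)"
  proof (rule sum.cong)
    fix l assume "l \<in> {0..K}"
    have "(\<integral>\<omega>. (of_bool (Z \<omega> = l) - \<pi> l) * (of_bool (Z \<omega> = k) - \<pi> k) * (f l \<omega> * \<phi> \<omega>) \<partial>M)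
        = (of_bool (l = k) * \<pi> k - \<pi> k * \<pi> l) * (a l / \<pi> l)"
      using L14[of "\<lambda>\<omega>. f l \<omega> * \<phi> \<omega>" l k] fG phi fbd fint bddf_mult[OF fbd phi(2)] by auto
    also have "\<dots> = (of_bool (l = k) - \<pi> k) * a l"
      using h0[of l] by (cases "\<pi> l = 0") (auto simp: field_simps)
    finally show "(\<integral>\<omega>. (of_bool (Z \<omega> = l) - \<pi> l) * (of_bool (Z \<omega> = k) - \<pi> k) * (f l \<omega> * \<phi> \<omega>) \<partial>M)
        = (of_bool (l = k) - \<pi> k) * a l" .
  qed simp
  also have "(\<Sum>l\<in>{0..K}. (of_bool (l = k) - \<pi> k) * a l) = a k - \<pi> k * (\<Sum>l\<in>{0..K}. a l)"
  proof -
    have "(\<Sum>l\<in>{0..K}. (of_bool (l = k) - \<pi> k) * a l) = (\<Sum>l\<in>{0..K}. (if l = k then a l else 0)) - \<pi> k * (\<Sum>l\<in>{0..K}. a l)"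
    proof -
      have "(\<Sum>l\<in>{0..K}. (of_bool (l = k) - \<pi> k) * a l) = (\<Sum>l\<in>{0..K}. (if l = k then a l else 0) - \<pi> k * a l)"
        by (intro sum.cong) (auto simp: algebra_simps)
      then show ?thesis by (simp add: sum_subtractf sum_distrib_left)
    qed
    then show ?thesis using k by simp
  qed
  finally show ?thesis by simp
qed

end

context rsetting begin

lemma cexp_G:
  "cexp_ZX M X MX Z mi l \<in> borel_measurable G"
  unfolding cexp_ZX_def by (intro borel_measurable_divide borel_measurable_cond_exp)

lemma cexp_bddf:
  assumes mi: "mi \<in> borel_measurable M" "\<forall>\<omega>\<in>space M. \<bar>mi \<omega>\<bar> \<le> B"
  shows "bddf M (cexp_ZX M X MX Z mi l)"
proof -
  define e where "e = real_cond_exp M G (\<lambda>w. mi w * of_bool (Z w = l))"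
  have eM: "e \<in> borel_measurable M" unfolding e_def by (rule borel_measurable_cond_exp2)
  have eb: "AE \<omega> in M. \<bar>e \<omega>\<bar> \<le> B"
    unfolding e_def using mi by (intro rce_bound) (auto simp: abs_mult)
  have cex: "AE \<omega> in M. cexp_ZX M X MX Z mi l \<omega> = e \<omega> / \<pi> l"
    using CE1[of l] unfolding cexp_ZX_def e_def by eventually_elim simp
  have fb: "bddf M (\<lambda>\<omega>. e \<omega> / \<pi> l)"
  proof (rule bddf_boundI)
    show "(\<lambda>\<omega>. e \<omega> / \<pi> l) \<in> borel_measurable M" using eM by measurable
    show "AE x in M. \<bar>e x / \<pi> l\<bar> \<le> B / \<pi> l"
      using eb
    proof eventually_elim
      case (elim x) then show ?case using pi_nonneg[of l] by (auto simp: abs_div intro: divide_right_mono)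
    qed
  qed
  show ?thesis by (rule bddf_AE[OF fb GtoM[OF cexp_G] cex])
qed

definition Sf :: "('w \<Rightarrow> real) \<Rightarrow> 'w \<Rightarrow> real" where
  "Sf mi \<omega> = (\<Sum>l\<in>{0..K}. (of_bool (Z \<omega> = l) - \<pi> l) * cexp_ZX M X MX Z mi l \<omega>)"

lemma Sf_bddf:
  assumes mi: "mi \<in> borel_measurable M" "\<forall>\<omega>\<in>space M. \<bar>mi \<omega>\<bar> \<le> B"
  shows "bddf M (Sf mi)"
  unfolding Sf_def by (intro bddf_sum bddf_intros cexp_bddf[OF mi])

lemma ORTH':
  assumes mi: "mi \<in> borel_measurable M" "\<forall>\<omega>\<in>space M. \<bar>mi \<omega>\<bar> \<le> B"
    and phi: "\<phi> \<in> borel_measurable G" "bddf M \<phi>" and k: "k \<le> K"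
  shows "(\<integral>\<omega>. (mi \<omega> - Sf mi \<omega>) * ((of_bool (Z \<omega> = k) - \<pi> k) * \<phi> \<omega>) \<partial>M) = 0"
  using ORTH[OF mi phi k] unfolding Sf_def .

lemma O2_gen:
  assumes mi: "mi \<in> borel_measurable M" "\<forall>\<omega>\<in>space M. \<bar>mi \<omega>\<bar> \<le> B"
    and mj: "mj \<in> borel_measurable M" "\<forall>\<omega>\<in>space M. \<bar>mj \<omega>\<bar> \<le> B'"
  shows "(\<integral>\<omega>. (mi \<omega> - Sf mi \<omega>) * Sf mj \<omega> \<partial>M) = 0"
proof -
  have mib: "bddf M mi" using mi by (intro bddf_boundI[where B=B]) auto
  have "(\<integral>\<omega>. (mi \<omega> - Sf mi \<omega>) * Sf mj \<omega> \<partial>M)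
      = (\<integral>\<omega>. (\<Sum>l\<in>{0..K}. (mi \<omega> - Sf mi \<omega>) * ((of_bool (Z \<omega> = l) - \<pi> l) * cexp_ZX M X MX Z mj l \<omega>)) \<partial>M)"
    unfolding Sf_def[of mj] by (simp add: sum_distrib_left)
  also have "\<dots> = (\<Sum>l\<in>{0..K}. (\<integral>\<omega>. (mi \<omega> - Sf mi \<omega>) * ((of_bool (Z \<omega> = l) - \<pi> l) * cexp_ZX M X MX Z mj l \<omega>) \<partial>M))"
    by (rule Bochner_Integration.integral_sum)
       (intro bddf_integrable bddf_intros mib Sf_bddf[OF mi] cexp_bddf[OF mj] | simp)+
  also have "\<dots> = 0"
    by (intro sum.neutral ballI ORTH'[OF mi cexp_G cexp_bddf[OF mj]]) auto
  finally show ?thesis .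
qed

lemma O1_gen:
  fixes w :: "nat \<Rightarrow> real" and kk :: "nat \<Rightarrow> nat" and h :: "nat \<Rightarrow> 'x \<Rightarrow> real"
  assumes mi: "mi \<in> borel_measurable M" "\<forall>\<omega>\<in>space M. \<bar>mi \<omega>\<bar> \<le> B"
    and kk: "\<forall>j<d. kk j \<le> K" and h: "\<forall>j. h j \<in> borel_measurable MX"
    and vb: "\<forall>\<omega>\<in>space M. \<bar>\<Sum>j<d. w j * ((of_bool (Z \<omega> = kk j) - \<pi> (kk j)) * h j (X \<omega>))\<bar> \<le> Mb"
  shows "(\<integral>\<omega>. (mi \<omega> - Sf mi \<omega>) * (\<Sum>j<d. w j * ((of_bool (Z \<omega> = kk j) - \<pi> (kk j)) * h j (X \<omega>))) \<partial>M) = 0"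
proof -
  define v where "v \<omega> = (\<Sum>j<d. w j * ((of_bool (Z \<omega> = kk j) - \<pi> (kk j)) * h j (X \<omega>)))" for \<omega>
  define Fh where "Fh l x = (\<Sum>j<d. w j * of_bool (kk j = l) * h j x)" for l x
  define \<psi>h where "\<psi>h l x = Fh l x - (\<Sum>l'\<in>{0..K}. \<pi> l' * Fh l' x)" for l x
  have XG: "X \<in> measurable G MX" by (rule measurable_vimage_algebra1) (auto intro: measurable_space[OF X_meas])
  have hm[measurable]: "h j \<in> borel_measurable MX" for j using h by simp
  have \<psi>hm: "\<psi>h l \<in> borel_measurable MX" for l unfolding \<psi>h_def Fh_def by measurable
  have \<psi>G: "(\<lambda>\<omega>. \<psi>h l (X \<omega>)) \<in> borel_measurable G" for l
    by (rule measurable_compose[OF XG \<psi>hm])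
  have vF: "v \<omega> = (\<Sum>l\<in>{0..K}. (of_bool (Z \<omega> = l) - \<pi> l) * Fh l (X \<omega>))" for \<omega>
  proof -
    have "v \<omega> = (\<Sum>j<d. \<Sum>l\<in>{0..K}. (of_bool (Z \<omega> = l) - \<pi> l) * (w j * of_bool (kk j = l) * h j (X \<omega>)))"
      unfolding v_def
    proof (rule sum.cong)
      fix j assume "j \<in> {..<d}"
      then have kj: "kk j \<in> {0..K}" using kk by auto
      have "(\<Sum>l\<in>{0..K}. (of_bool (Z \<omega> = l) - \<pi> l) * (w j * of_bool (kk j = l) * h j (X \<omega>)))
          = (\<Sum>l\<in>{0..K}. if l = kk j then (of_bool (Z \<omega> = l) - \<pi> l) * (w j * h j (X \<omega>)) else 0)"
        by (intro sum.cong) auto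
      also have "\<dots> = (of_bool (Z \<omega> = kk j) - \<pi> (kk j)) * (w j * h j (X \<omega>))" using kj by simp
      finally show "w j * ((of_bool (Z \<omega> = kk j) - \<pi> (kk j)) * h j (X \<omega>))
          = (\<Sum>l\<in>{0..K}. (of_bool (Z \<omega> = l) - \<pi> l) * (w j * of_bool (kk j = l) * h j (X \<omega>)))"
        by (simp add: algebra_simps)
    qed simp
    also have "\<dots> = (\<Sum>l\<in>{0..K}. (of_bool (Z \<omega> = l) - \<pi> l) * Fh l (X \<omega>))"
      unfolding Fh_def by (subst sum.swap) (simp add: sum_distrib_left)
    finally show ?thesis .
  qed
  have vpsi: "v \<omega> = (\<Sum>l\<in>{0..K}. (of_bool (Z \<omega> = l) - \<pi> l) * \<psi>h l (X \<omega>))" if w: "\<omega> \<in> space M" for \<omega>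
  proof -
    have s0: "(\<Sum>l\<in>{0..K}. (of_bool (Z \<omega> = l) - \<pi> l)) = 0"
      using ind_sum[OF w] pi_sum by (simp add: sum_subtractf)
    have "(\<Sum>l\<in>{0..K}. (of_bool (Z \<omega> = l) - \<pi> l) * \<psi>h l (X \<omega>))
        = (\<Sum>l\<in>{0..K}. (of_bool (Z \<omega> = l) - \<pi> l) * Fh l (X \<omega>))
          - (\<Sum>l\<in>{0..K}. (of_bool (Z \<omega> = l) - \<pi> l)) * (\<Sum>l'\<in>{0..K}. \<pi> l' * Fh l' (X \<omega>))"
      unfolding \<psi>h_def by (simp add: algebra_simps sum_subtractf sum_distrib_right)
    then show ?thesis using s0 vF by simp
  qed
  have vZ: "v \<omega> = \<psi>h l (X \<omega>)" if w: "\<omega> \<in> space M" "Z \<omega> = l" for \<omega> l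
  proof -
    have lK: "l \<in> {0..K}" using Z_range w by auto
    have "v \<omega> = (\<Sum>l'\<in>{0..K}. of_bool (l = l') * Fh l' (X \<omega>)) - (\<Sum>l'\<in>{0..K}. \<pi> l' * Fh l' (X \<omega>))"
      unfolding vF using w(2) by (simp add: left_diff_distrib sum_subtractf)
    also have "(\<Sum>l'\<in>{0..K}. of_bool (l = l') * Fh l' (X \<omega>)) = (\<Sum>l'\<in>{0..K}. if l' = l then Fh l' (X \<omega>) else 0)"
      by (intro sum.cong) auto
    also have "\<dots> = Fh l (X \<omega>)" using lK by simp
    finally show ?thesis unfolding \<psi>h_def by simp
  qed
  define \<psi> where "\<psi> l \<omega> = (if \<pi> l > 0 then \<psi>h l (X \<omega>) else 0)" for l \<omega>
  have \<psi>G': "\<psi> l \<in> borel_measurable G" for l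
    unfolding \<psi>_def by (cases "\<pi> l > 0") (simp_all add: \<psi>G)
  have \<psi>b: "bddf M (\<psi> l)" for l
  proof (cases "\<pi> l > 0")
    case True
    define Bs where "Bs = {x \<in> space MX. \<bar>\<psi>h l x\<bar> > Mb}"
    have Bs: "Bs \<in> sets MX" unfolding Bs_def using \<psi>hm[of l] by measurable
    have emp: "{\<omega>\<in>space M. Z \<omega> = l} \<inter> (X -` Bs \<inter> space M) = {}"
    proof (intro equalityI subsetI)
      fix \<omega> assume a: "\<omega> \<in> {\<omega>\<in>space M. Z \<omega> = l} \<inter> (X -` Bs \<inter> space M)"
      then have w: "\<omega> \<in> space M" "Z \<omega> = l" "\<bar>\<psi>h l (X \<omega>)\<bar> > Mb" unfolding Bs_def by auto
      have "\<bar>v \<omega>\<bar> \<le> Mb" using vb w(1) unfolding v_def by blast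
      then show "\<omega> \<in> {}" using vZ[OF w(1,2)] w(3) by simp
    qed simp
    have "measure M ({\<omega>\<in>space M. Z \<omega> = l} \<inter> (X -` Bs \<inter> space M)) = measure M {\<omega>\<in>space M. Z \<omega> = l} * measure M (X -` Bs \<inter> space M)"
      using indep Bs by blast
    then have "measure M {\<omega>\<in>space M. Z \<omega> = l} * measure M (X -` Bs \<inter> space M) = 0"
      unfolding emp by simp
    then have m0: "measure M (X -` Bs \<inter> space M) = 0" using True pi_def by simp
    have XBs: "X -` Bs \<inter> space M \<in> sets M" using Bs X_meas by (simp add: measurable_sets)
    have "AE \<omega> in M. \<omega> \<notin> X -` Bs \<inter> space M"
      using m0 XBs by (intro AE_I'[of "X -` Bs \<inter> space M"]) (auto simp: null_sets_def emeasure_eq_measure)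
    then have "AE \<omega> in M. \<bar>\<psi> l \<omega>\<bar> \<le> Mb"
    proof (rule AE_mp, intro AE_I2 impI)
      fix \<omega> assume "\<omega> \<in> space M" "\<omega> \<notin> X -` Bs \<inter> space M"
      moreover have "X \<omega> \<in> space MX" using \<open>\<omega> \<in> space M\<close> measurable_space[OF X_meas] by auto
      ultimately show "\<bar>\<psi> l \<omega>\<bar> \<le> Mb" using True unfolding \<psi>_def Bs_def by auto
    qed
    then show ?thesis using GtoM[OF \<psi>G'] by (intro bddf_boundI) auto
  next
    case False
    then show ?thesis unfolding \<psi>_def by (simp add: bddf_const)
  qed
  have vAE: "AE \<omega> in M. v \<omega> = (\<Sum>l\<in>{0..K}. (of_bool (Z \<omega> = l) - \<pi> l) * \<psi> l \<omega>)"
  proof -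
    have "AE \<omega> in M. \<forall>l\<in>{0..K}. (of_bool (Z \<omega> = l) - \<pi> l) * \<psi>h l (X \<omega>) = (of_bool (Z \<omega> = l) - \<pi> l) * \<psi> l \<omega>"
    proof (rule AE_finite_allI)
      fix l
      show "AE \<omega> in M. (of_bool (Z \<omega> = l) - \<pi> l) * \<psi>h l (X \<omega>) = (of_bool (Z \<omega> = l) - \<pi> l) * \<psi> l \<omega>"
      proof (cases "\<pi> l > 0")
        case True then show ?thesis unfolding \<psi>_def by simp
      next
        case False
        then have p0: "\<pi> l = 0" using pi_nonneg[of l] by simp
        show ?thesis using ind_AE0[OF p0] unfolding \<psi>_def by eventually_elim (simp add: p0)
      qed
    qed simp
    then show ?thesis
    proof (rule AE_mp, intro AE_I2 impI)
      fix \<omega> assume a: "\<omega> \<in> space M" "\<forall>l\<in>{0..K}. (of_bool (Z \<omega> = l) - \<pi> l) * \<psi>h l (X \<omega>) = (of_bool (Z \<omega> = l) - \<pi> l) * \<psi> l \<omega>"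
      have "v \<omega> = (\<Sum>l\<in>{0..K}. (of_bool (Z \<omega> = l) - \<pi> l) * \<psi>h l (X \<omega>))" using vpsi[OF a(1)] .
      also have "\<dots> = (\<Sum>l\<in>{0..K}. (of_bool (Z \<omega> = l) - \<pi> l) * \<psi> l \<omega>)"
        using a(2) by (intro sum.cong) blast+
      finally show "v \<omega> = (\<Sum>l\<in>{0..K}. (of_bool (Z \<omega> = l) - \<pi> l) * \<psi> l \<omega>)" .
    qed
  qed
  have mib: "bddf M mi" using mi by (intro bddf_boundI[where B=B]) auto
  have vm: "v \<in> borel_measurable M" unfolding v_def using X_meas by measurable
  have "(\<integral>\<omega>. (mi \<omega> - Sf mi \<omega>) * v \<omega> \<partial>M)
      = (\<integral>\<omega>. (\<Sum>l\<in>{0..K}. (mi \<omega> - Sf mi \<omega>) * ((of_bool (Z \<omega> = l) - \<pi> l) * \<psi> l \<omega>)) \<partial>M)"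
  proof (rule integral_cong_AE)
    show "AE \<omega> in M. (mi \<omega> - Sf mi \<omega>) * v \<omega> = (\<Sum>l\<in>{0..K}. (mi \<omega> - Sf mi \<omega>) * ((of_bool (Z \<omega> = l) - \<pi> l) * \<psi> l \<omega>))"
      using vAE by eventually_elim (simp add: sum_distrib_left)
    show "(\<lambda>\<omega>. (mi \<omega> - Sf mi \<omega>) * v \<omega>) \<in> borel_measurable M"
      using bddf_meas[OF Sf_bddf[OF mi]] mi(1) vm by measurable
    show "(\<lambda>\<omega>. \<Sum>l\<in>{0..K}. (mi \<omega> - Sf mi \<omega>) * ((of_bool (Z \<omega> = l) - \<pi> l) * \<psi> l \<omega>)) \<in> borel_measurable M"
      by (rule bddf_meas) (intro bddf_sum bddf_intros mib Sf_bddf[OF mi] \<psi>b)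
  qed
  also have "\<dots> = (\<Sum>l\<in>{0..K}. (\<integral>\<omega>. (mi \<omega> - Sf mi \<omega>) * ((of_bool (Z \<omega> = l) - \<pi> l) * \<psi> l \<omega>) \<partial>M))"
    by (rule Bochner_Integration.integral_sum)
       (intro bddf_integrable bddf_intros mib Sf_bddf[OF mi] \<psi>b | simp)+
  also have "\<dots> = 0"
    by (intro sum.neutral ballI ORTH'[OF mi \<psi>G' \<psi>b]) auto
  finally show ?thesis unfolding v_def .
qed

end

lemma split_sum_add: "(\<Sum>a<q+d. f a) = (\<Sum>a<q. f a) + (\<Sum>b<d. f (q+b))"
  for f :: "nat \<Rightarrow> real"
  by (induction d) (auto simp: add.assoc)

lemma PN:
  fixes g SS :: "nat \<Rightarrow> 'w \<Rightarrow> real" and p :: "nat \<Rightarrow> nat \<Rightarrow> real" and Am :: "nat \<Rightarrow> nat \<Rightarrow> real"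
  assumes prob: "prob_space M"
    and gb: "\<forall>a<q+d. bddf M (g a)" and Sb: "\<forall>a<q. bddf M (SS a)"
    and PS: "\<forall>b<q+d. (\<Sum>a<q+d. p i a * (\<integral>\<omega>. g a \<omega> * g b \<omega> \<partial>M)) = of_bool (i = b)"
    and O1: "\<forall>j<q. \<forall>b<d. (\<integral>\<omega>. (g j \<omega> - SS j \<omega>) * g (q+b) \<omega> \<partial>M) = 0"
    and O2: "\<forall>j<q. \<forall>a<q. (\<integral>\<omega>. (g j \<omega> - SS j \<omega>) * SS a \<omega> \<partial>M) = 0"
    and ij: "i<q" "j<q"
  shows "0 \<le> p i i"
    "((\<Sum>a<q. p i a * (\<integral>\<omega>. (g a \<omega> - SS a \<omega>) * (g j \<omega> - SS j \<omega>) \<partial>M)) - of_bool (i = j))\<^sup>2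
       \<le> p i i * (\<integral>\<omega>. (\<Sum>j'<q. ((\<Sum>b<d. Am j' b * g (q+b) \<omega>) - SS j' \<omega>)\<^sup>2) \<partial>M)"
proof -
  interpret prob_space M by (rule prob)
  have I: "integrable M h" if "bddf M h" for h by (rule bddf_integrable[OF _ that]) (simp add: finite_measure_axioms)
  define \<eta> where "\<eta> \<omega> = (\<Sum>a<q+d. p i a * g a \<omega>)" for \<omega>
  have \<eta>b: "bddf M \<eta>" unfolding \<eta>_def using gb by (intro bddf_sum bddf_mult bddf_const) auto
  have Eg: "(\<integral>\<omega>. \<eta> \<omega> * g b \<omega> \<partial>M) = of_bool (i = b)" if b: "b < q+d" for b
  proof -
    have "(\<integral>\<omega>. \<eta> \<omega> * g b \<omega> \<partial>M) = (\<integral>\<omega>. (\<Sum>a<q+d. p i a * (g a \<omega> * g b \<omega>)) \<partial>M)"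
      unfolding \<eta>_def by (simp add: sum_distrib_right mult.assoc)
    also have "\<dots> = (\<Sum>a<q+d. p i a * (\<integral>\<omega>. g a \<omega> * g b \<omega> \<partial>M))"
      using gb b by (subst Bochner_Integration.integral_sum) (auto intro!: I bddf_mult)
    also have "\<dots> = of_bool (i = b)" using PS b by simp
    finally show ?thesis .
  qed
  have Eee: "(\<integral>\<omega>. \<eta> \<omega> * \<eta> \<omega> \<partial>M) = p i i"
  proof -
    have "(\<integral>\<omega>. \<eta> \<omega> * \<eta> \<omega> \<partial>M) = (\<integral>\<omega>. (\<Sum>b<q+d. p i b * (\<eta> \<omega> * g b \<omega>)) \<partial>M)"
      by (rule Bochner_Integration.integral_cong) (auto simp: \<eta>_def[of \<omega> for \<omega>] sum_distrib_left algebra_simps)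
    also have "\<dots> = (\<Sum>b<q+d. p i b * (\<integral>\<omega>. \<eta> \<omega> * g b \<omega> \<partial>M))"
      using gb \<eta>b by (subst Bochner_Integration.integral_sum) (auto intro!: I bddf_mult)
    also have "\<dots> = (\<Sum>b<q+d. p i b * of_bool (i = b))" by (intro sum.cong) (auto simp: Eg)
    also have "\<dots> = (\<Sum>b<q+d. if b = i then p i b else 0)" by (intro sum.cong) auto
    also have "\<dots> = p i i" using ij by simp
    finally show ?thesis .
  qed
  show p0: "0 \<le> p i i" unfolding Eee[symmetric] by simp
  define st where "st a = (\<integral>\<omega>. (g a \<omega> - SS a \<omega>) * (g j \<omega> - SS j \<omega>) \<partial>M)" for a
  have gbq: "bddf M (g a)" if "a < q" for a using gb that by auto
  have gbd: "bddf M (g (q+b))" if "b < d" for b using gb that by auto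
  have T1: "(\<integral>\<omega>. \<eta> \<omega> * (g j \<omega> - SS j \<omega>) \<partial>M) = (\<Sum>a<q. p i a * st a)"
  proof -
    have "(\<integral>\<omega>. \<eta> \<omega> * (g j \<omega> - SS j \<omega>) \<partial>M) = (\<integral>\<omega>. (\<Sum>a<q+d. p i a * (g a \<omega> * (g j \<omega> - SS j \<omega>))) \<partial>M)"
      unfolding \<eta>_def by (simp add: sum_distrib_right mult.assoc)
    also have "\<dots> = (\<Sum>a<q+d. p i a * (\<integral>\<omega>. g a \<omega> * (g j \<omega> - SS j \<omega>) \<partial>M))"
      using gb Sb ij by (subst Bochner_Integration.integral_sum) (auto intro!: I bddf_mult bddf_diff)
    also have "\<dots> = (\<Sum>a<q. p i a * (\<integral>\<omega>. g a \<omega> * (g j \<omega> - SS j \<omega>) \<partial>M))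
                   + (\<Sum>b<d. p i (q+b) * (\<integral>\<omega>. g (q+b) \<omega> * (g j \<omega> - SS j \<omega>) \<partial>M))"
      by (rule split_sum_add)
    also have "(\<Sum>b<d. p i (q+b) * (\<integral>\<omega>. g (q+b) \<omega> * (g j \<omega> - SS j \<omega>) \<partial>M)) = 0"
      using O1 ij by (intro sum.neutral) (auto simp: mult.commute)
    also have "(\<Sum>a<q. p i a * (\<integral>\<omega>. g a \<omega> * (g j \<omega> - SS j \<omega>) \<partial>M)) = (\<Sum>a<q. p i a * st a)"
    proof (intro sum.cong refl arg_cong[where f="\<lambda>x. p i _ * x"])
      fix a assume a: "a \<in> {..<q}"
      have "(\<integral>\<omega>. g a \<omega> * (g j \<omega> - SS j \<omega>) \<partial>M)
          = (\<integral>\<omega>. (g a \<omega> - SS a \<omega>) * (g j \<omega> - SS j \<omega>) + (g j \<omega> - SS j \<omega>) * SS a \<omega> \<partial>M)"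
        by (rule Bochner_Integration.integral_cong) (auto simp: algebra_simps)
      also have "\<dots> = st a + (\<integral>\<omega>. (g j \<omega> - SS j \<omega>) * SS a \<omega> \<partial>M)"
        unfolding st_def using a ij gbq Sb
        by (subst Bochner_Integration.integral_add) (auto intro!: I bddf_mult bddf_diff)
      also have "\<dots> = st a" using O2 a ij by simp
      finally show "(\<integral>\<omega>. g a \<omega> * (g j \<omega> - SS j \<omega>) \<partial>M) = st a" .
    qed
    finally show ?thesis by simp
  qed
  define dd where "dd j' \<omega> = (\<Sum>b<d. Am j' b * g (q+b) \<omega>) - SS j' \<omega>" for j' \<omega>
  have ddb: "bddf M (dd j')" if "j' < q" for j'
    unfolding dd_def using that Sb gbd by (intro bddf_diff bddf_sum bddf_mult bddf_const) auto
  have T3: "(\<integral>\<omega>. \<eta> \<omega> * (\<Sum>b<d. Am j b * g (q+b) \<omega>) \<partial>M) = 0"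
  proof -
    have "(\<integral>\<omega>. \<eta> \<omega> * (\<Sum>b<d. Am j b * g (q+b) \<omega>) \<partial>M) = (\<integral>\<omega>. (\<Sum>b<d. Am j b * (\<eta> \<omega> * g (q+b) \<omega>)) \<partial>M)"
      by (simp add: sum_distrib_left algebra_simps)
    also have "\<dots> = (\<Sum>b<d. Am j b * (\<integral>\<omega>. \<eta> \<omega> * g (q+b) \<omega> \<partial>M))"
      using gbd \<eta>b by (subst Bochner_Integration.integral_sum) (auto intro!: I bddf_mult)
    also have "\<dots> = 0" using ij by (intro sum.neutral) (auto simp: Eg)
    finally show ?thesis .
  qed
  have Ediff: "(\<Sum>a<q. p i a * st a) - of_bool (i = j) = (\<integral>\<omega>. \<eta> \<omega> * dd j \<omega> \<partial>M)"
  proof -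
    have "(\<Sum>a<q. p i a * st a) - of_bool (i = j) = (\<integral>\<omega>. \<eta> \<omega> * (g j \<omega> - SS j \<omega>) \<partial>M) - (\<integral>\<omega>. \<eta> \<omega> * g j \<omega> \<partial>M)"
      using T1 Eg[of j] ij by simp
    also have "\<dots> = - (\<integral>\<omega>. \<eta> \<omega> * SS j \<omega> \<partial>M)"
      using \<eta>b gbq Sb ij
      by (subst Bochner_Integration.integral_diff[symmetric]) (auto intro!: I bddf_mult bddf_diff simp: algebra_simps)
    also have "\<dots> = (\<integral>\<omega>. \<eta> \<omega> * (\<Sum>b<d. Am j b * g (q+b) \<omega>) \<partial>M) - (\<integral>\<omega>. \<eta> \<omega> * SS j \<omega> \<partial>M)"
      using T3 by simp
    also have "\<dots> = (\<integral>\<omega>. \<eta> \<omega> * dd j \<omega> \<partial>M)"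
      unfolding dd_def using \<eta>b Sb ij gbd
      by (subst Bochner_Integration.integral_diff[symmetric])
         (auto intro!: I bddf_mult bddf_sum bddf_const simp: algebra_simps)
    finally show ?thesis .
  qed
  have "((\<Sum>a<q. p i a * st a) - of_bool (i = j))\<^sup>2 \<le> (\<integral>\<omega>. (\<eta> \<omega>)\<^sup>2 \<partial>M) * (\<integral>\<omega>. (dd j \<omega>)\<^sup>2 \<partial>M)"
    unfolding Ediff by (rule CS_integral[OF finite_measure_axioms \<eta>b ddb[OF ij(2)]])
  also have "(\<integral>\<omega>. (\<eta> \<omega>)\<^sup>2 \<partial>M) = p i i" using Eee by (simp add: power2_eq_square)
  also have "(\<integral>\<omega>. (dd j \<omega>)\<^sup>2 \<partial>M) \<le> (\<integral>\<omega>. (\<Sum>j'<q. (dd j' \<omega>)\<^sup>2) \<partial>M)"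
  proof (rule integral_mono)
    show "integrable M (\<lambda>\<omega>. (dd j \<omega>)\<^sup>2)" unfolding power2_eq_square using ddb ij by (auto intro!: I bddf_mult)
    show "integrable M (\<lambda>\<omega>. \<Sum>j'<q. (dd j' \<omega>)\<^sup>2)" unfolding power2_eq_square using ddb
      by (auto intro!: I bddf_mult bddf_sum)
    fix \<omega> show "(dd j \<omega>)\<^sup>2 \<le> (\<Sum>j'<q. (dd j' \<omega>)\<^sup>2)"
      using ij by (intro member_le_sum) auto
  qed
  then have "p i i * (\<integral>\<omega>. (dd j \<omega>)\<^sup>2 \<partial>M) \<le> p i i * (\<integral>\<omega>. (\<Sum>j'<q. (dd j' \<omega>)\<^sup>2) \<partial>M)"
    using p0 by (rule mult_left_mono)
  finally show "((\<Sum>a<q. p i a * (\<integral>\<omega>. (g a \<omega> - SS a \<omega>) * (g j \<omega> - SS j \<omega>) \<partial>M)) - of_bool (i = j))\<^sup>2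
       \<le> p i i * (\<integral>\<omega>. (\<Sum>j'<q. ((\<Sum>b<d. Am j' b * g (q+b) \<omega>) - SS j' \<omega>)\<^sup>2) \<partial>M)"
    unfolding st_def dd_def .
qed


lemma mult_entry:
  fixes A B :: "real mat"
  assumes "A \<in> carrier_mat n m" "B \<in> carrier_mat m p" "i<n" "j<p"
  shows "(A*B) $$ (i,j) = (\<Sum>k<m. A$$(i,k) * B$$(k,j))"
  using assms by (auto simp: scalar_prod_def atLeast0LessThan intro!: sum.cong)

lemma WV_formula:
  fixes W :: "real mat"
  assumes "W \<in> carrier_mat d d" "b < d"
  shows "vec_index (W *\<^sub>v Vvec d Z X \<pi> kk h \<omega>) b
       = (\<Sum>k<d. W$$(b,k) * ((of_bool (Z \<omega> = kk k) - \<pi> (kk k)) * h k (X \<omega>)))"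
  using assms by (auto simp: Vvec_def scalar_prod_def atLeast0LessThan intro!: sum.cong)

lemma tovec_index:
  "a < CARD('q) \<Longrightarrow> vec_index (tovec (u::real^'q::finite)) a = u $ qidx a"
  "dim_vec (tovec (u::real^'q::finite)) = CARD('q)"
  by (simp_all add: tovec_def)

lemma gvec_index:
  fixes W :: "real mat"
  assumes "dim_row W = d" "a < CARD('q) + d"
  shows "vec_index (gvec (m :: real^'q::finite \<Rightarrow> _) Y Z W V \<beta> \<omega>) a
       = (if a < CARD('q) then m \<beta> (Y \<omega>) (Z \<omega>) $ qidx a else vec_index (W *\<^sub>v V \<omega>) (a - CARD('q)))"
  "dim_vec (gvec (m :: real^'q::finite \<Rightarrow> _) Y Z W V \<beta> \<omega>) = CARD('q) + dim_row W"
  using assms by (simp_all add: gvec_def tovec_def)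

lemma smom_entry:
  "a < d \<Longrightarrow> b < d \<Longrightarrow> smom M d f $$ (a,b) = (\<integral>\<omega>. vec_index (f \<omega>) a * vec_index (f \<omega>) b \<partial>M)"
  "smom M d f \<in> carrier_mat d d"
  by (simp_all add: smom_def)

lemma deriv_const': "deriv (\<lambda>t::real. c) 0 = (0::real)"
  by (rule DERIV_imp_deriv) (rule DERIV_const)

theorem lemma4:
  fixes M :: "'w measure" and MX :: "'x measure"
    and Y :: "'w \<Rightarrow> 'y" and Z :: "'w \<Rightarrow> nat" and X :: "'w \<Rightarrow> 'x"
    and K :: nat and \<pi> :: "nat \<Rightarrow> real"
    and m :: "real^'q::finite \<Rightarrow> 'y \<Rightarrow> nat \<Rightarrow> real^'q" and \<beta>0 :: "real^'q"
    and dm :: "real^'q \<Rightarrow> 'y \<Rightarrow> nat \<Rightarrow> real^'q^'q"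
    and d2m :: "real^'q \<Rightarrow> 'y \<Rightarrow> nat \<Rightarrow> real^'q^'q^'q"
    and r :: "nat \<Rightarrow> nat" and kk :: "nat \<Rightarrow> nat \<Rightarrow> nat" and h :: "nat \<Rightarrow> nat \<Rightarrow> 'x \<Rightarrow> real"
    and W :: "nat \<Rightarrow> real mat" and A :: "nat \<Rightarrow> real mat" and Mb :: real
  defines "q \<equiv> CARD('q)"
    and "V \<equiv> (\<lambda>n. Vvec (r n - CARD('q)) Z X \<pi> (kk n) (h n))"
    and "g \<equiv> (\<lambda>n. gvec m Y Z (W n) (Vvec (r n - CARD('q)) Z X \<pi> (kk n) (h n)))"
    and "mZ \<equiv> (\<lambda>\<omega>. m \<beta>0 (Y \<omega>) (Z \<omega>))"
    and "S \<equiv> aug_term M X MX Z K \<pi> (\<lambda>\<omega>. m \<beta>0 (Y \<omega>) (Z \<omega>))"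
  assumes
    \<comment> \<open>setting: randomized treatment Z in {0..K} with known probabilities, X independent of Z\<close>
        P: "prob_space M"
    and Z_meas: "Z \<in> measurable M (count_space UNIV)"
    and X_meas: "X \<in> measurable M MX"
    and Z_range: "\<forall>\<omega>\<in>space M. Z \<omega> \<le> K"
    and pi_def: "\<forall>k. \<pi> k = measure M {\<omega> \<in> space M. Z \<omega> = k}"
    and indep: "\<forall>k. \<forall>B\<in>sets MX. measure M ({\<omega>\<in>space M. Z \<omega> = k} \<inter> (X -` B \<inter> space M))
              = measure M {\<omega>\<in>space M. Z \<omega> = k} * measure M (X -` B \<inter> space M)"
    \<comment> \<open>estimating function\<close>
    and m_meas: "\<forall>\<beta> i. (\<lambda>\<omega>. m \<beta> (Y \<omega>) (Z \<omega>) $ i) \<in> borel_measurable M"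
    and m_mean0: "\<forall>i. (LINT \<omega>|M. m \<beta>0 (Y \<omega>) (Z \<omega>) $ i) = 0"
    \<comment> \<open>regularity of m near beta_0\<close>
    and dm_meas: "\<forall>i j. (\<lambda>\<omega>. dm \<beta>0 (Y \<omega>) (Z \<omega>) $ i $ j) \<in> borel_measurable M"
    and reg: "\<exists>\<delta>>0. \<exists>G :: 'y \<Rightarrow> nat \<Rightarrow> real. integrable M (\<lambda>\<omega>. G (Y \<omega>) (Z \<omega>)) \<and>
       (\<forall>\<omega>\<in>space M.
          continuous_on (ball \<beta>0 \<delta>) (\<lambda>b. dm b (Y \<omega>) (Z \<omega>)) \<and>
          continuous_on (ball \<beta>0 \<delta>) (\<lambda>b. d2m b (Y \<omega>) (Z \<omega>)) \<and>
          (\<forall>b\<in>ball \<beta>0 \<delta>.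
             ((\<lambda>c. m c (Y \<omega>) (Z \<omega>)) has_derivative (\<lambda>u. dm b (Y \<omega>) (Z \<omega>) *v u)) (at b) \<and>
             ((\<lambda>c. dm c (Y \<omega>) (Z \<omega>)) has_derivative
                (\<lambda>u. \<chi> i j. \<Sum>l\<in>UNIV. d2m b (Y \<omega>) (Z \<omega>) $ i $ j $ l * u $ l)) (at b) \<and>
             norm (dm b (Y \<omega>) (Z \<omega>)) \<le> G (Y \<omega>) (Z \<omega>) \<and>
             norm (d2m b (Y \<omega>) (Z \<omega>)) \<le> G (Y \<omega>) (Z \<omega>)))"
    and Dm_rank: "vec_space.rank q (jac_exp M q (\<lambda>\<beta> \<omega>. tovec (m \<beta> (Y \<omega>) (Z \<omega>))) \<beta>0) = q"
    \<comment> \<open>the augmentation vectors V_n\<close>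
    and r_gt: "\<forall>n. r n > q"
    and kk_range: "\<forall>n j. j < r n - q \<longrightarrow> kk n j \<le> K"
    and h_meas: "\<forall>n j. h n j \<in> borel_measurable MX"
    \<comment> \<open>(C1)\<close>
    and W_dim: "\<forall>n. W n \<in> carrier_mat (r n - q) (r n - q)"
    and C1i: "Mb > 0 \<and>
       (\<forall>n \<beta>. \<forall>\<omega>\<in>space M. \<forall>a<r n. \<bar>vec_index (g n \<beta> \<omega>) a\<bar> \<le> Mb)"
    and C1ii: "\<exists>c C. 0 < c \<and>
       (\<forall>n e. eigenvalue (smom M (r n) (g n \<beta>0)) e \<longrightarrow> c \<le> e \<and> e \<le> C)"
    and A_dim: "\<forall>n. A n \<in> carrier_mat q (r n - q)"
    and C1iii: "(\<lambda>n. LINT \<omega>|M. (let d = A n *\<^sub>v (W n *\<^sub>v V n \<omega>) - tovec (S \<omega>) in d \<bullet> d))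
                  \<longlonglongrightarrow> 0"
    \<comment> \<open>(C2)\<close>
    and C2: "(\<lambda>n. real (r n) ^ 3 / real n) \<longlonglongrightarrow> 0"
    \<comment> \<open>(C3)\<close>
    and C3: "\<forall>v \<in> carrier_vec q. v \<noteq> 0\<^sub>v q \<longrightarrow>
       v \<bullet> (smom M q (\<lambda>\<omega>. tovec (mZ \<omega> - S \<omega>)) *\<^sub>v v) > 0"
  shows "(\<lambda>n. let Dr = jac_exp M (r n) (g n) \<beta>0;
                  Dm = jac_exp M q (\<lambda>\<beta> \<omega>. tovec (m \<beta> (Y \<omega>) (Z \<omega>))) \<beta>0 in
             fro_norm (transpose_mat Dr * minv (smom M (r n) (g n \<beta>0)) * Dr
                       - transpose_mat Dm * minv (smom M q (\<lambda>\<omega>. tovec (mZ \<omega> - S \<omega>))) * Dm))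
         \<longlonglongrightarrow> 0"
proof -
  have rs: "rsetting M X MX Z K \<pi>"
    unfolding rsetting_def rsetting_axioms_def using P Z_meas X_meas Z_range pi_def indep by auto
  interpret rs: rsetting M X MX Z K \<pi> by (rule rs)
  have qq: "CARD('q) = q" by (simp add: q_def)
  define d where "d n = r n - q" for n
  have rd: "r n = q + d n" for n using r_gt unfolding d_def by (simp add: less_imp_le)
  have gV: "g n = gvec m Y Z (W n) (V n)" for n unfolding g_def V_def by simp
  have Wc: "W n \<in> carrier_mat (d n) (d n)" for n using W_dim unfolding d_def by simp
  have Ac: "A n \<in> carrier_mat q (d n)" for n using A_dim unfolding d_def by simp
  have gidx: "vec_index (g n \<beta> \<omega>) a = (if a < q then m \<beta> (Y \<omega>) (Z \<omega>) $ qidx a else vec_index (W n *\<^sub>v V n \<omega>) (a - q))"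
    if "a < r n" for n \<beta> \<omega> a
    unfolding gV using gvec_index(1)[of "W n" "d n" a m Y Z "V n" \<beta> \<omega>] Wc[of n] that rd[of n] qq by auto
  define mm where "mm a \<omega> = m \<beta>0 (Y \<omega>) (Z \<omega>) $ qidx a" for a \<omega>
  have mm_meas: "mm a \<in> borel_measurable M" for a unfolding mm_def using m_meas by simp
  have Mb0: "Mb > 0" using C1i by simp
  have mm_bd: "\<forall>\<omega>\<in>space M. \<bar>mm a \<omega>\<bar> \<le> Mb" if "a < q" for a
  proof
    fix \<omega> assume "\<omega> \<in> space M"
    moreover have "a < r 0" using that r_gt by (metis less_trans)
    ultimately have "\<bar>vec_index (g 0 \<beta>0 \<omega>) a\<bar> \<le> Mb" using C1i by blast
    then show "\<bar>mm a \<omega>\<bar> \<le> Mb" using gidx[of a 0 \<beta>0 \<omega>] \<open>a < r 0\<close> that unfolding mm_def by simp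
  qed
  define SS where "SS a = rs.Sf (mm a)" for a
  have S_idx: "S \<omega> $ qidx a = SS a \<omega>" for \<omega> a
    unfolding S_def aug_term_def SS_def rs.Sf_def mm_def by simp
  have SS_b: "bddf M (SS a)" if "a < q" for a unfolding SS_def by (rule rs.Sf_bddf[OF mm_meas mm_bd[OF that]])
  define WV where "WV n b \<omega> = vec_index (W n *\<^sub>v V n \<omega>) b" for n b \<omega>
  have WV_f: "WV n b = (\<lambda>\<omega>. \<Sum>k<d n. W n $$ (b,k) * ((of_bool (Z \<omega> = kk n k) - \<pi> (kk n k)) * h n k (X \<omega>)))"
    if "b < d n" for n b
  proof (rule ext)
    fix \<omega>
    show "WV n b \<omega> = (\<Sum>k<d n. W n $$ (b,k) * ((of_bool (Z \<omega> = kk n k) - \<pi> (kk n k)) * h n k (X \<omega>)))"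
      using WV_formula[OF Wc[of n] that, of Z X \<pi> "kk n" "h n" \<omega>] unfolding WV_def V_def d_def q_def .
  qed
  have WV_meas: "WV n b \<in> borel_measurable M" if "b < d n" for n b
  proof -
    have [measurable]: "h n k \<in> borel_measurable MX" for k using h_meas by simp
    have [measurable]: "X \<in> measurable M MX" by (rule X_meas)
    show ?thesis unfolding WV_f[OF that] by measurable
  qed
  have WV_bd: "\<forall>\<omega>\<in>space M. \<bar>WV n b \<omega>\<bar> \<le> Mb" if "b < d n" for n b
  proof
    fix \<omega> assume "\<omega> \<in> space M"
    moreover have "q + b < r n" using that rd by simp
    ultimately have "\<bar>vec_index (g n \<beta>0 \<omega>) (q+b)\<bar> \<le> Mb" using C1i by blast
    then show "\<bar>WV n b \<omega>\<bar> \<le> Mb" using gidx[of "q+b" n \<beta>0 \<omega>] \<open>q + b < r n\<close> unfolding WV_def by simp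
  qed
  define gg where "gg n a \<omega> = vec_index (g n \<beta>0 \<omega>) a" for n a \<omega>
  have gg_lo: "gg n a = mm a" if "a < q" for n a
  proof -
    have an: "a < r n" using that rd[of n] by simp
    show ?thesis unfolding gg_def mm_def by (rule ext) (simp add: gidx[OF an] that)
  qed
  have gg_hi: "gg n (q+b) = WV n b" if "b < d n" for n b
  proof -
    have an: "q + b < r n" using that rd[of n] by simp
    show ?thesis unfolding gg_def WV_def by (rule ext) (simp add: gidx[OF an])
  qed
  have gg_b: "bddf M (gg n a)" if "a < q + d n" for n a
  proof (cases "a < q")
    case True
    then show ?thesis unfolding gg_lo[OF True] using mm_bd[OF True] mm_meas by (intro bddf_boundI[where B=Mb]) auto
  next
    case False
    define b where "b = a - q"
    have b: "a = q + b" "b < d n" using False that unfolding b_def by auto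
    show ?thesis unfolding b(1) gg_hi[OF b(2)] using WV_bd[OF b(2)] WV_meas[OF b(2)]
      by (intro bddf_boundI[where B=Mb]) auto
  qed
  define Sig where "Sig = smom M q (\<lambda>\<omega>. tovec (mZ \<omega> - S \<omega>))"
  have Sigc: "Sig \<in> carrier_mat q q" unfolding Sig_def by (rule smom_entry(2))
  have Sig_e: "Sig $$ (a,b) = (\<integral>\<omega>. (mm a \<omega> - SS a \<omega>) * (mm b \<omega> - SS b \<omega>) \<partial>M)" if "a < q" "b < q" for a b
    unfolding Sig_def smom_entry(1)[OF that] using that
    by (simp add: tovec_index qq mZ_def S_idx mm_def)
  define T where "T = minv Sig"
  have Tprops: "Sig * T = 1\<^sub>m q" "T * Sig = 1\<^sub>m q" "T \<in> carrier_mat q q"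
  proof -
    have nz: "Sig *\<^sub>v v \<noteq> 0\<^sub>v q" if "v \<in> carrier_vec q" "v \<noteq> 0\<^sub>v q" for v
    proof
      assume "Sig *\<^sub>v v = 0\<^sub>v q"
      then have "v \<bullet> (Sig *\<^sub>v v) = 0" using that by simp
      moreover have "v \<bullet> (Sig *\<^sub>v v) > 0" using C3 that unfolding Sig_def by blast
      ultimately show False by simp
    qed
    show "Sig * T = 1\<^sub>m q" "T * Sig = 1\<^sub>m q" "T \<in> carrier_mat q q"
      unfolding T_def using minv_props[OF Sigc nz] by auto
  qed
  have Tinv: "\<forall>i j. i<q \<longrightarrow> j<q \<longrightarrow> (\<Sum>k<q. Sig $$ (i,k) * T $$ (k,j)) = of_bool (i=j)"
  proof (intro allI impI)
    fix i j assume ij: "i < q" "j < q"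
    have "(\<Sum>k<q. Sig $$ (i,k) * T $$ (k,j)) = (Sig * T) $$ (i,j)" by (rule mult_entry[OF Sigc Tprops(3) ij, symmetric])
    also have "\<dots> = 1\<^sub>m q $$ (i,j)" by (simp only: Tprops(1))
    also have "\<dots> = of_bool (i=j)" using ij by simp
    finally show "(\<Sum>k<q. Sig $$ (i,k) * T $$ (k,j)) = of_bool (i=j)" .
  qed
  define Sn where "Sn n = smom M (r n) (g n \<beta>0)" for n
  have Snc: "Sn n \<in> carrier_mat (r n) (r n)" for n unfolding Sn_def by (rule smom_entry(2))
  have Sn_e: "Sn n $$ (a,b) = (\<integral>\<omega>. gg n a \<omega> * gg n b \<omega> \<partial>M)" if "a < r n" "b < r n" for n a b
    unfolding Sn_def smom_entry(1)[OF that] gg_def ..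
  define PP where "PP n = minv (Sn n)" for n
  have Pprops: "PP n * Sn n = 1\<^sub>m (r n)" "PP n \<in> carrier_mat (r n) (r n)" for n
  proof -
    obtain c C where cC: "0 < c" "\<forall>n e. eigenvalue (smom M (r n) (g n \<beta>0)) e \<longrightarrow> c \<le> e \<and> e \<le> C"
      using C1ii by blast
    have nz: "Sn n *\<^sub>v v \<noteq> 0\<^sub>v (r n)" if "v \<in> carrier_vec (r n)" "v \<noteq> 0\<^sub>v (r n)" for v
    proof
      assume "Sn n *\<^sub>v v = 0\<^sub>v (r n)"
      then have "eigenvector (Sn n) v 0" unfolding eigenvector_def using that Snc[of n] by auto
      then have "eigenvalue (Sn n) 0" unfolding eigenvalue_def by blast
      then show False using cC unfolding Sn_def by force
    qed
    show "PP n * Sn n = 1\<^sub>m (r n)" "PP n \<in> carrier_mat (r n) (r n)"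
      unfolding PP_def using minv_props[OF Snc nz] by auto
  qed
  have Pinv: "(\<Sum>a<r n. PP n $$ (i,a) * Sn n $$ (a,b)) = of_bool (i=b)" if "i < r n" "b < r n" for n i b
  proof -
    have "(\<Sum>a<r n. PP n $$ (i,a) * Sn n $$ (a,b)) = (PP n * Sn n) $$ (i,b)" by (rule mult_entry[OF Pprops(2) Snc that, symmetric])
    also have "\<dots> = 1\<^sub>m (r n) $$ (i,b)" by (simp only: Pprops(1))
    also have "\<dots> = of_bool (i=b)" using that by simp
    finally show ?thesis .
  qed
  define \<delta> where "\<delta> n = (LINT \<omega>|M. (let dv = A n *\<^sub>v (W n *\<^sub>v V n \<omega>) - tovec (S \<omega>) in dv \<bullet> dv))" for n
  have \<delta>_eq: "\<delta> n = (\<integral>\<omega>. (\<Sum>j'<q. ((\<Sum>b<d n. A n $$ (j',b) * gg n (q+b) \<omega>) - SS j' \<omega>)\<^sup>2) \<partial>M)" for n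
    unfolding \<delta>_def
  proof (rule Bochner_Integration.integral_cong[OF refl])
    fix \<omega>
    define x where "x = W n *\<^sub>v V n \<omega>"
    have dx: "dim_vec x = d n" unfolding x_def using Wc[of n] by simp
    define dv where "dv = A n *\<^sub>v x - tovec (S \<omega>)"
    have ddv: "dim_vec dv = q" unfolding dv_def using Ac[of n] by (simp add: tovec_def q_def)
    have dvi: "vec_index dv j' = (\<Sum>b<d n. A n $$ (j',b) * gg n (q+b) \<omega>) - SS j' \<omega>" if "j' < q" for j'
    proof -
      have "vec_index dv j' = vec_index (A n *\<^sub>v x) j' - vec_index (tovec (S \<omega>)) j'"
        unfolding dv_def using that Ac[of n] by (simp add: tovec_def q_def)
      also have "vec_index (A n *\<^sub>v x) j' = (\<Sum>b<d n. A n $$ (j',b) * vec_index x b)"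
        using that Ac[of n] dx by (auto simp: scalar_prod_def atLeast0LessThan intro!: sum.cong)
      also have "\<dots> = (\<Sum>b<d n. A n $$ (j',b) * gg n (q+b) \<omega>)"
        by (intro sum.cong refl) (simp add: gg_hi x_def WV_def)
      also have "vec_index (tovec (S \<omega>)) j' = SS j' \<omega>" using that qq by (simp add: tovec_index S_idx)
      finally show ?thesis .
    qed
    have "dv \<bullet> dv = (\<Sum>j'<q. (vec_index dv j')\<^sup>2)"
      unfolding scalar_prod_def ddv by (simp add: atLeast0LessThan power2_eq_square)
    also have "\<dots> = (\<Sum>j'<q. ((\<Sum>b<d n. A n $$ (j',b) * gg n (q+b) \<omega>) - SS j' \<omega>)\<^sup>2)"
      by (intro sum.cong) (auto simp: dvi)
    finally show "(let dv = A n *\<^sub>v (W n *\<^sub>v V n \<omega>) - tovec (S \<omega>) in dv \<bullet> dv)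
        = (\<Sum>j'<q. ((\<Sum>b<d n. A n $$ (j',b) * gg n (q+b) \<omega>) - SS j' \<omega>)\<^sup>2)"
      unfolding dv_def x_def Let_def .
  qed
  have \<delta>0: "\<forall>n. \<delta> n \<ge> 0" unfolding \<delta>_eq by (auto intro!: integral_nonneg_AE sum_nonneg)
  have \<delta>lim: "\<delta> \<longlonglongrightarrow> 0" using C1iii unfolding \<delta>_def .
  have PNres: "0 \<le> PP n $$ (i,i) \<and>
      ((\<Sum>a<q. PP n $$ (i,a) * Sig $$ (a,j)) - of_bool (i = j))\<^sup>2 \<le> PP n $$ (i,i) * \<delta> n"
    if ij: "i < q" "j < q" for n i j
  proof -
    have PS: "\<forall>b<q+d n. (\<Sum>a<q+d n. PP n $$ (i,a) * (\<integral>\<omega>. gg n a \<omega> * gg n b \<omega> \<partial>M)) = of_bool (i = b)"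
    proof (intro allI impI)
      fix b assume b: "b < q + d n"
      have "(\<Sum>a<q+d n. PP n $$ (i,a) * (\<integral>\<omega>. gg n a \<omega> * gg n b \<omega> \<partial>M)) = (\<Sum>a<r n. PP n $$ (i,a) * Sn n $$ (a,b))"
        using b rd[of n] by (intro sum.cong) (auto simp: Sn_e)
      also have "\<dots> = of_bool (i = b)" using Pinv[of i n b] b ij rd[of n] by simp
      finally show "(\<Sum>a<q+d n. PP n $$ (i,a) * (\<integral>\<omega>. gg n a \<omega> * gg n b \<omega> \<partial>M)) = of_bool (i = b)" .
    qed
    have O1: "\<forall>j<q. \<forall>b<d n. (\<integral>\<omega>. (gg n j \<omega> - SS j \<omega>) * gg n (q+b) \<omega> \<partial>M) = 0"
    proof (intro allI impI)
      fix j b assume jb: "j < q" "b < d n"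
      have kkr: "\<forall>k<d n. kk n k \<le> K" using kk_range unfolding d_def by simp
      have hm: "\<forall>k. h n k \<in> borel_measurable MX" using h_meas by simp
      have vb: "\<forall>\<omega>\<in>space M. \<bar>\<Sum>k<d n. W n $$ (b,k) * ((of_bool (Z \<omega> = kk n k) - \<pi> (kk n k)) * h n k (X \<omega>))\<bar> \<le> Mb"
        using WV_bd[OF jb(2)] unfolding WV_f[OF jb(2)] .
      show "(\<integral>\<omega>. (gg n j \<omega> - SS j \<omega>) * gg n (q+b) \<omega> \<partial>M) = 0"
        unfolding gg_lo[OF jb(1)] gg_hi[OF jb(2)] WV_f[OF jb(2)] SS_def
        by (rule rs.O1_gen[OF mm_meas mm_bd[OF jb(1)] kkr hm vb])
    qed
    have O2: "\<forall>j<q. \<forall>a<q. (\<integral>\<omega>. (gg n j \<omega> - SS j \<omega>) * SS a \<omega> \<partial>M) = 0"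
    proof (intro allI impI)
      fix j a assume ja: "j < q" "a < q"
      show "(\<integral>\<omega>. (gg n j \<omega> - SS j \<omega>) * SS a \<omega> \<partial>M) = 0"
        unfolding gg_lo[OF ja(1)] SS_def
        by (rule rs.O2_gen[OF mm_meas mm_bd[OF ja(1)] mm_meas mm_bd[OF ja(2)]])
    qed
    have gb: "\<forall>a<q+d n. bddf M (gg n a)" using gg_b by blast
    have Sb: "\<forall>a<q. bddf M (SS a)" using SS_b by blast
    note R1 = PN(1)[where M=M and q=q and d="d n" and g="gg n" and SS=SS and p="\<lambda>i a. PP n $$ (i,a)" and
       i=i and j=j, OF P gb Sb PS O1 O2 ij]
    note R2 = PN(2)[where M=M and q=q and d="d n" and g="gg n" and SS=SS and p="\<lambda>i a. PP n $$ (i,a)" and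
       Am="\<lambda>j b. A n $$ (j,b)" and i=i and j=j, OF P gb Sb PS O1 O2 ij]
    have st: "(\<Sum>a<q. PP n $$ (i,a) * (\<integral>\<omega>. (gg n a \<omega> - SS a \<omega>) * (gg n j \<omega> - SS j \<omega>) \<partial>M))
        = (\<Sum>a<q. PP n $$ (i,a) * Sig $$ (a,j))"
      using ij by (intro sum.cong) (auto simp: gg_lo Sig_e)
    show ?thesis using R1 R2 unfolding st \<delta>_eq by simp
  qed
  have Plim: "(\<lambda>n. PP n $$ (a,b)) \<longlonglongrightarrow> T $$ (a,b)" if "a < q" "b < q" for a b
    by (rule core_limit[where st="\<lambda>a b. Sig $$ (a,b)" and T="\<lambda>a b. T $$ (a,b)" and \<delta>=\<delta> and q=q,
          OF \<delta>lim \<delta>0 _ _ Tinv that]) (use PNres in auto)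
  define Dm where "Dm = jac_exp M q (\<lambda>\<beta> \<omega>. tovec (m \<beta> (Y \<omega>) (Z \<omega>))) \<beta>0"
  define Dr where "Dr n = jac_exp M (r n) (g n) \<beta>0" for n
  have Dmc: "Dm \<in> carrier_mat q q" unfolding Dm_def jac_exp_def qq by simp
  have Drc: "Dr n \<in> carrier_mat (r n) q" for n unfolding Dr_def jac_exp_def qq by simp
  have Dr_e: "Dr n $$ (a,j) = (if a < q then Dm $$ (a,j) else 0)" if "a < r n" "j < q" for n a j
  proof (cases "a < q")
    case True
    have "\<And>\<beta> \<omega>. vec_index (g n \<beta> \<omega>) a = vec_index (tovec (m \<beta> (Y \<omega>) (Z \<omega>))) a"
      using gidx[OF that(1)] True qq by (simp add: tovec_index)
    then show ?thesis using True that unfolding Dr_def Dm_def jac_exp_def qq by simp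
  next
    case False
    have "\<And>\<beta> \<omega>. vec_index (g n \<beta> \<omega>) a = vec_index (W n *\<^sub>v V n \<omega>) (a - q)"
      using gidx[OF that(1)] False by simp
    then show ?thesis using False that unfolding Dr_def jac_exp_def qq by (simp add: deriv_const')
  qed
  define ent where "ent F i j = (\<Sum>b<q. (\<Sum>a<q. Dm $$ (a,i) * F a b) * Dm $$ (b,j))" for F :: "nat \<Rightarrow> nat \<Rightarrow> real" and i j
  have Xe: "(transpose_mat (Dr n) * PP n * Dr n - transpose_mat Dm * T * Dm) $$ (i,j)
      = ent (\<lambda>a b. PP n $$ (a,b)) i j - ent (\<lambda>a b. T $$ (a,b)) i j" if "i < q" "j < q" for n i j
  proof -
    have c1: "transpose_mat (Dr n) \<in> carrier_mat q (r n)" using Drc[of n] by simp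
    have c2: "transpose_mat (Dr n) * PP n \<in> carrier_mat q (r n)" using c1 Pprops(2)[of n] by simp
    have c3: "transpose_mat Dm * T \<in> carrier_mat q q" using Dmc Tprops(3) by simp
    have e1: "(transpose_mat (Dr n) * PP n * Dr n) $$ (i,j) = ent (\<lambda>a b. PP n $$ (a,b)) i j"
    proof -
      have "(transpose_mat (Dr n) * PP n * Dr n) $$ (i,j) = (\<Sum>b<r n. (transpose_mat (Dr n) * PP n) $$ (i,b) * Dr n $$ (b,j))"
        by (rule mult_entry[OF c2 Drc that])
      also have "\<dots> = (\<Sum>b<r n. (\<Sum>a<r n. Dr n $$ (a,i) * PP n $$ (a,b)) * Dr n $$ (b,j))"
        using that Drc[of n] by (intro sum.cong refl) (simp add: mult_entry[OF c1 Pprops(2)])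
      also have "\<dots> = ent (\<lambda>a b. PP n $$ (a,b)) i j"
        unfolding rd ent_def split_sum_add using that rd[of n] by (simp add: Dr_e)
      finally show ?thesis .
    qed
    have e2: "(transpose_mat Dm * T * Dm) $$ (i,j) = ent (\<lambda>a b. T $$ (a,b)) i j"
    proof -
      have "(transpose_mat Dm * T * Dm) $$ (i,j) = (\<Sum>b<q. (transpose_mat Dm * T) $$ (i,b) * Dm $$ (b,j))"
        by (rule mult_entry[OF c3 Dmc that])
      also have "\<dots> = ent (\<lambda>a b. T $$ (a,b)) i j"
      proof -
        have "(transpose_mat Dm * T) $$ (i,b) = (\<Sum>a<q. Dm $$ (a,i) * T $$ (a,b))" if "b<q" for b
          using mult_entry[of "transpose_mat Dm" q q T q i b] Dmc Tprops(3) that \<open>i<q\<close> by simp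
        then show ?thesis unfolding ent_def by (intro sum.cong refl) simp
      qed
      finally show ?thesis .
    qed
    show ?thesis using e1 e2 that Dmc Tprops(3) by simp
  qed
  have dimX: "dim_row (transpose_mat (Dr n) * PP n * Dr n - transpose_mat Dm * T * Dm) = q"
    "dim_col (transpose_mat (Dr n) * PP n * Dr n - transpose_mat Dm * T * Dm) = q" for n
    using Dmc Tprops(3) by auto
  have entlim: "(\<lambda>n. ent (\<lambda>a b. PP n $$ (a,b)) i j - ent (\<lambda>a b. T $$ (a,b)) i j) \<longlonglongrightarrow> 0" for i j
  proof -
    have "(\<lambda>n. ent (\<lambda>a b. PP n $$ (a,b)) i j) \<longlonglongrightarrow> ent (\<lambda>a b. T $$ (a,b)) i j"
      unfolding ent_def
      by (intro tendsto_sum tendsto_mult tendsto_const) (auto intro: Plim)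
    then show ?thesis by (simp add: LIM_zero)
  qed
  have "(\<lambda>n. fro_norm (transpose_mat (Dr n) * PP n * Dr n - transpose_mat Dm * T * Dm)) \<longlonglongrightarrow> sqrt (\<Sum>i<q. \<Sum>j<q. 0\<^sup>2)"
    unfolding fro_norm_def dimX
    by (subst sum.cong[OF refl sum.cong[OF refl arg_cong[where f="\<lambda>x. x\<^sup>2", OF Xe]]], simp, simp)
       (intro tendsto_real_sqrt tendsto_sum tendsto_power entlim)
  then show ?thesis unfolding Let_def Dr_def Dm_def PP_def Sn_def T_def Sig_def by simp
qed


end
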